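(* Let $P(X)=\sum_{i=0}^n a_iX^i\in K[X]$ be a polynomial of degree $n$. Assume that $(d,\mathrm{val}(a_d))$ is an extremal point of $\mathrm{NP}(P)$, for some integer $0\le d\le n$. Define sequences $(A_i)_{i\ge0}$, $(B_i)_{i\ge1}$, $(V_i)_{i\ge0}$ in $K[X]$ by $$A_0=\sum_{i=0}^d a_iX^i,\qquad V_0=1,$$ $$A_{i+1}=A_i+(V_iP\bmod A_i),\qquad B_{i+1}=P\,\mathrm{div}\,A_{i+1},\qquad V_{i+1}=(2V_i-V_i^2B_{i+1})\bmod A_{i+1}.$$ Then the following hold. 1. Each $A_i$ has degree $d$ and leading coefficient $a_d$, so the recursion is well defined. 2. The sequence $(A_i)$ converges coefficientwise to a polynomial $A_\infty$ which divides $P$, has degree $d$ and leading coefficient $a_d$, and satisfies $\mathrm{NF}(A_\infty)=\mathrm{NF}(P)|_{[0,d]}$. 3. Set $$\kappa=\mathrm{NF}(P)(d+1)+\mathrm{NF}(P)(d-1)-2\,\mathrm{NF}(P)(d),$$ with the conventions $\mathrm{NF}(P)(-1)=\mathrm{NF}(P)(n+1)=+\infty$. Then $\kappa>0$, and for all $i\ge0$, $$\mathrm{NF}(A_\infty-A_i)\ \ge\ \mathrm{NF}(P)|_{[0,d-1]}+2^i\kappa.$$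
   Context: $K$ is a complete discrete valuation field with valuation $\mathrm{val}:K\to\mathbb Z\cup\{+\infty\}$, normalized to be surjective, with $\mathrm{val}(0)=+\infty$. For $Q=\sum q_iX^i\in K[X]$ nonzero of degree $m$, its Newton function $\mathrm{NF}(Q):[0,m]\to\mathbb R\cup\{+\infty\}$ is the greatest convex function with $\mathrm{NF}(Q)(i)\le\mathrm{val}(q_i)$ for all integers $0\le i\le m$. Its epigraph (the convex hull of the sets $\{(i,y):y\ge\mathrm{val}(q_i)\}$) is the Newton polygon $\mathrm{NP}(Q)$; an extremal point of $\mathrm{NP}(Q)$ is a vertex of this epigraph. For a convex function $g$ on $[0,M]$ and a polynomial $Q$ of degree $\le M$, "$\mathrm{NF}(Q)\ge g$" means $\mathrm{val}(q_i)\ge g(i)$ for all integers $0\le i\le M$ (for $Q=0$ this always holds). $A\,\mathrm{div}\,B$ and $A\bmod B$ denote quotient and remainder in Euclidean division: $A=(A\,\mathrm{div}\,B)B+(A\bmod B)$ with $\deg(A\bmod B)<\deg B$. *)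

theory Defs
  imports "HOL-Analysis.Analysis" "HOL-Computational_Algebra.Polynomial"
    "HOL-Library.Extended_Real"
begin

definition complete_dvf :: "('a::field \<Rightarrow> ereal) \<Rightarrow> bool" where
  "complete_dvf val \<longleftrightarrow>
     (\<forall>x. val x = \<infinity> \<longleftrightarrow> x = 0) \<and>
     (\<forall>x y. val (x * y) = val x + val y) \<and>
     (\<forall>x y. min (val x) (val y) \<le> val (x + y)) \<and>
     range val = insert \<infinity> (range (\<lambda>k::int. ereal (of_int k))) \<and>
     (\<forall>s :: nat \<Rightarrow> 'a.
        (\<forall>M::int. \<exists>N. \<forall>m\<ge>N. \<forall>n\<ge>N. ereal (of_int M) \<le> val (s m - s n)) \<longrightarrow>
        (\<exists>l. \<forall>M::int. \<exists>N. \<forall>n\<ge>N. ereal (of_int M) \<le> val (s n - l)))"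

definition poly_val_converges ::
  "('a::field \<Rightarrow> ereal) \<Rightarrow> (nat \<Rightarrow> 'a poly) \<Rightarrow> 'a poly \<Rightarrow> bool" where
  "poly_val_converges val A L \<longleftrightarrow>
     (\<forall>j. \<forall>M::int. \<exists>N. \<forall>i\<ge>N. ereal (of_int M) \<le> val (coeff (A i) j - coeff L j))"

definition convex_on_ereal :: "real set \<Rightarrow> (real \<Rightarrow> ereal) \<Rightarrow> bool" where
  "convex_on_ereal S g \<longleftrightarrow>
     (\<forall>x\<in>S. \<forall>y\<in>S. \<forall>t. 0 \<le> t \<and> t \<le> 1 \<longrightarrow>
        g ((1 - t) * x + t * y) \<le> ereal (1 - t) * g x + ereal t * g y)"

text \<open>Outside [0, deg Q] it is
  set to +\<infinity> (this realizes the convention NF(P)(-1) = NF(P)(n+1) = +\<infinity>).\<close>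
definition NF :: "('a::field \<Rightarrow> ereal) \<Rightarrow> 'a poly \<Rightarrow> real \<Rightarrow> ereal" where
  "NF val Q x =
     (if 0 \<le> x \<and> x \<le> real (degree Q) then
        Sup {g x | g. convex_on_ereal {0..real (degree Q)} g \<and>
                      (\<forall>z\<in>{0..real (degree Q)}. g z \<noteq> -\<infinity>) \<and>
                      (\<forall>i\<le>degree Q. g (real i) \<le> val (coeff Q i))}
      else \<infinity>)"

definition NP :: "('a::field \<Rightarrow> ereal) \<Rightarrow> 'a poly \<Rightarrow> (real \<times> real) set" where
  "NP val Q = convex hull (\<Union>i\<in>{..degree Q}. {(real i, y) | y. val (coeff Q i) \<le> ereal y})"

primrec AV_seq :: "'a::field poly \<Rightarrow> nat \<Rightarrow> nat \<Rightarrow> 'a poly \<times> 'a poly" where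
  "AV_seq P d 0 = ((\<Sum>i\<le>d. monom (coeff P i) i), 1)"
| "AV_seq P d (Suc i) =
     (let A = fst (AV_seq P d i); V = snd (AV_seq P d i);
          A' = A + (V * P) mod A;
          B' = P div A';
          V' = (2 * V - V ^ 2 * B') mod A'
      in (A', V'))"

definition A_seq :: "'a::field poly \<Rightarrow> nat \<Rightarrow> nat \<Rightarrow> 'a poly" where
  "A_seq P d i = fst (AV_seq P d i)"

definition V_seq :: "'a::field poly \<Rightarrow> nat \<Rightarrow> nat \<Rightarrow> 'a poly" where
  "V_seq P d i = snd (AV_seq P d i)"

definition B_seq :: "'a::field poly \<Rightarrow> nat \<Rightarrow> nat \<Rightarrow> 'a poly" where
  "B_seq P d i = P div A_seq P d i"

end

theory Submission
  imports Defs
begin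


locale dvf =
  fixes val :: "'a::field \<Rightarrow> ereal"
  assumes cdvf: "complete_dvf val"
begin

lemma val_inf_iff: "val x = \<infinity> \<longleftrightarrow> x = 0"
  using cdvf unfolding complete_dvf_def by blast
lemma val_zero[simp]: "val 0 = \<infinity>" using val_inf_iff by simp
lemma val_mult: "val (x * y) = val x + val y"
  using cdvf unfolding complete_dvf_def by blast
lemma val_add: "min (val x) (val y) \<le> val (x + y)"
  using cdvf unfolding complete_dvf_def by blast
lemma val_range: "range val = insert \<infinity> (range (\<lambda>k::int. ereal (of_int k)))"
  using cdvf unfolding complete_dvf_def by blast
lemma val_complete: fixes s :: "nat \<Rightarrow> 'a" shows
  "(\<forall>M::int. \<exists>N. \<forall>m\<ge>N. \<forall>n\<ge>N. ereal (of_int M) \<le> val (s m - s n)) \<Longrightarrow>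
   (\<exists>l. \<forall>M::int. \<exists>N. \<forall>n\<ge>N. ereal (of_int M) \<le> val (s n - l))"
proof -
  assume h: "\<forall>M::int. \<exists>N. \<forall>m\<ge>N. \<forall>n\<ge>N. ereal (of_int M) \<le> val (s m - s n)"
  from cdvf have "\<forall>s :: nat \<Rightarrow> 'a.
        (\<forall>M::int. \<exists>N. \<forall>m\<ge>N. \<forall>n\<ge>N. ereal (of_int M) \<le> val (s m - s n)) \<longrightarrow>
        (\<exists>l. \<forall>M::int. \<exists>N. \<forall>n\<ge>N. ereal (of_int M) \<le> val (s n - l))"
    unfolding complete_dvf_def by (elim conjE)
  then show ?thesis using h by blast
qed

lemma val_not_minf[simp]: "val x \<noteq> -\<infinity>"
proof -
  have "val x \<in> range val" by simp
  then show ?thesis using val_range by auto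
qed

lemma val_finite: "x \<noteq> 0 \<Longrightarrow> \<exists>r. val x = ereal r"
  using val_not_minf[of x] val_inf_iff[of x] by (cases "val x") auto

lemma val_one[simp]: "val 1 = 0"
proof -
  obtain r where r: "val 1 = ereal r" using val_finite[of 1] by auto
  have "val 1 = val 1 + val 1" using val_mult[of 1 1] by simp
  with r show ?thesis by (simp add: zero_ereal_def)
qed

lemma val_minus_one[simp]: "val (-1) = 0"
proof -
  obtain r where r: "val (-1) = ereal r" using val_finite[of "-1"] by auto
  have "val 1 = val (-1) + val (-1)" using val_mult[of "-1" "-1"] by simp
  with r show ?thesis by (simp add: zero_ereal_def)
qed

lemma val_minus[simp]: "val (- x) = val x"
  using val_mult[of "-1" x] by simp

lemma val_diff: "min (val x) (val y) \<le> val (x - y)"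
  using val_add[of x "-y"] by simp

lemma val_add_ge: "M \<le> val x \<Longrightarrow> M \<le> val y \<Longrightarrow> M \<le> val (x + y)"
  using val_add[of x y] by (meson min.bounded_iff order_trans)
lemma val_diff_ge: "M \<le> val x \<Longrightarrow> M \<le> val y \<Longrightarrow> M \<le> val (x - y)"
  using val_diff[of x y] by (meson min.bounded_iff order_trans)

lemma val_sum_ge: "finite S \<Longrightarrow> (\<And>i. i \<in> S \<Longrightarrow> M \<le> val (f i)) \<Longrightarrow> M \<le> val (sum f S)"
  by (induction S rule: finite_induct) (auto intro!: val_add_ge)

lemma val_inverse: "x \<noteq> 0 \<Longrightarrow> val (inverse x) = - val x"
proof -
  assume x: "x \<noteq> 0"
  obtain r where r: "val x = ereal r" using val_finite[OF x] by auto
  have "0 = val (x * inverse x)" using x by simp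
  also have "\<dots> = val x + val (inverse x)" by (rule val_mult)
  finally show ?thesis using r by (cases "val (inverse x)") (auto simp: zero_ereal_def)
qed

lemma val_strict: assumes "val x < val y" shows "val (x + y) = val x"
proof -
  have a: "min (val x) (val y) \<le> val (x + y)" by (rule val_add)
  have "min (val (x + y)) (val (-y)) \<le> val (x + y + - y)" by (rule val_add)
  hence b: "min (val (x + y)) (val y) \<le> val x" by simp
  show ?thesis using a b assms by (auto simp: min_def split: if_splits)
qed

lemma val_two: "0 \<le> val (2::'a)"
  using val_add[of 1 1] by (simp add: one_add_one)

lemma val_ge_all: "(\<And>M::int. ereal (of_int M) \<le> val x) \<Longrightarrow> x = 0"
proof (rule ccontr)
  assume h: "\<And>M::int. ereal (of_int M) \<le> val x" and "x \<noteq> 0"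
  then obtain r where r: "val x = ereal r" using val_finite by auto
  have "ereal (of_int (\<lceil>r\<rceil> + 1)) \<le> val x" by (rule h)
  with r show False by simp linarith
qed

definition GB :: "real \<Rightarrow> real \<Rightarrow> 'a poly \<Rightarrow> bool" where
  "GB l c Q \<longleftrightarrow> (\<forall>k. ereal (c + l * real k) \<le> val (coeff Q k))"

lemma GB_0[simp]: "GB l c 0" by (simp add: GB_def)

lemma GB_add: "GB l c p \<Longrightarrow> GB l c q \<Longrightarrow> GB l c (p + q)"
  by (auto simp: GB_def intro!: val_add_ge)
lemma GB_diff: "GB l c p \<Longrightarrow> GB l c q \<Longrightarrow> GB l c (p - q)"
  by (auto simp: GB_def intro!: val_diff_ge)
lemma GB_minus: "GB l c p \<Longrightarrow> GB l c (- p)"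
  by (auto simp: GB_def)
lemma GB_mono: "GB l c p \<Longrightarrow> c' \<le> c \<Longrightarrow> GB l c' p"
  unfolding GB_def by (meson add_le_cancel_right ereal_less_eq(3) order_trans)

lemma GB_mult: assumes "GB l c1 p" "GB l c2 q" shows "GB l (c1 + c2) (p * q)"
  unfolding GB_def
proof
  fix k
  show "ereal (c1 + c2 + l * real k) \<le> val (coeff (p * q) k)"
    unfolding coeff_mult
  proof (rule val_sum_ge)
    fix i assume i: "i \<in> {..k}"
    have "ereal (c1 + c2 + l * real k) = ereal (c1 + l * real i) + ereal (c2 + l * real (k - i))"
      using i by (simp add: of_nat_diff algebra_simps)
    also have "\<dots> \<le> val (coeff p i) + val (coeff q (k - i))"
      using assms unfolding GB_def by (intro add_mono) auto
    finally show "ereal (c1 + c2 + l * real k) \<le> val (coeff p i * coeff q (k - i))"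
      by (simp add: val_mult)
  qed auto
qed


lemma GB_1: "c \<le> 0 \<Longrightarrow> GB l c 1"
  by (auto simp: GB_def coeff_1 zero_ereal_def)

lemma GB_smult: "GB l c p \<Longrightarrow> ereal e \<le> val a \<Longrightarrow> GB l (e + c) (smult a p)"
  unfolding GB_def
proof (intro allI)
  fix k assume "\<forall>k. ereal (c + l * real k) \<le> val (coeff p k)" "ereal e \<le> val a"
  hence "ereal e + ereal (c + l * real k) \<le> val a + val (coeff p k)" by (intro add_mono) auto
  thus "ereal (e + c + l * real k) \<le> val (coeff (smult a p) k)" by (simp add: val_mult add.assoc)
qed

lemma GB_monom: "ereal (c + l * real n) \<le> val a \<Longrightarrow> GB l c (monom a n)"
  by (auto simp: GB_def coeff_monom)

lemma GB_coeff: "GB l c p \<Longrightarrow> ereal (c + l * real k) \<le> val (coeff p k)"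
  by (simp add: GB_def)

lemma DL:
  assumes dA: "degree A = d" and aA: "val (coeff A d) = ereal (cA + l * real d)"
    and GA: "GB l cA A"
  shows "GB l c R \<Longrightarrow> GB l c (R mod A) \<and> GB l (c - cA) (R div A)"
proof (induction R rule: measure_induct_rule[where f = "\<lambda>R. if R = 0 then 0 else Suc (degree R)"])
  case (less R)
  have A0: "A \<noteq> 0" using aA dA by auto
  have ad0: "coeff A d \<noteq> 0" using aA by auto
  show ?case
  proof (cases "R = 0")
    case True then show ?thesis by simp
  next
    case R0: False
    show ?thesis
    proof (cases "degree R < d")
      case True
      then show ?thesis using less.prems dA by (simp add: mod_poly_less div_poly_less)
    next
      case False
      define m where "m = monom (coeff R (degree R) / coeff A d) (degree R - d)"
      define R' where "R' = R - m * A"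
      have Rdec: "R = R' + m * A" by (simp add: R'_def)
      have cR': "coeff R' (degree R) = 0"
        using False ad0 by (simp add: R'_def m_def coeff_monom_mult)
      have dm: "degree (m * A) \<le> degree R"
        proof -
        have "degree (m * A) \<le> degree m + degree A" by (rule degree_mult_le)
        moreover have "degree m \<le> degree R - d" unfolding m_def by (rule degree_monom_le)
        ultimately show ?thesis using False dA by linarith
      qed
      have "degree R' \<le> degree R" unfolding R'_def using dm degree_diff_le_max[of R "m * A"] by simp
      hence smaller: "(if R' = 0 then 0 else Suc (degree R')) < (if R = 0 then 0 else Suc (degree R))"
      proof (cases "R' = 0")
        case True then show ?thesis using R0 by simp
      next
        case False
        hence c1: "coeff R' (degree R') \<noteq> 0" by simp
        have "degree R' \<noteq> degree R"
        proof
          assume "degree R' = degree R"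
          with cR' c1 show False by simp
        qed
        with \<open>degree R' \<le> degree R\<close> False R0 show ?thesis by simp
      qed
      have lr: "ereal (c + l * real (degree R)) \<le> val (coeff R (degree R))"
        using less.prems by (simp add: GB_def)
      have Gm: "GB l (c - cA) m"
        unfolding m_def
      proof (rule GB_monom)
        have "val (coeff R (degree R) / coeff A d) = val (coeff R (degree R)) - ereal (cA + l * real d)"
          using ad0 aA by (simp add: divide_inverse val_mult val_inverse minus_ereal_def)
        moreover have "ereal (c - cA + l * real (degree R - d)) = ereal (c + l * real (degree R)) - ereal (cA + l * real d)"
          using False by (simp add: of_nat_diff algebra_simps)
        ultimately show "ereal (c - cA + l * real (degree R - d)) \<le> val (coeff R (degree R) / coeff A d)"
          using lr by (metis ereal_minus_mono order_refl)
      qed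
      have GmA: "GB l c (m * A)" using GB_mult[OF Gm GA] by simp
      have GR': "GB l c R'" unfolding R'_def by (rule GB_diff[OF less.prems GmA])
      from less.IH[OF smaller GR'] have IH: "GB l c (R' mod A)" "GB l (c - cA) (R' div A)" by auto
      have "R mod A = R' mod A" using Rdec by (simp add: mod_mult_self1)
      moreover have "R div A = m + R' div A" using Rdec A0 by (simp add: div_mult_self1)
      ultimately show ?thesis using IH Gm by (simp add: GB_add)
    qed
  qed
qed

end


locale nsetup = dvf val for val :: "'a::field \<Rightarrow> ereal" +
  fixes P :: "'a poly" and d :: nat and psi :: "nat \<Rightarrow> ereal" and sL vd \<kappa> :: real
  assumes d1: "1 \<le> d" and dn: "d < degree P"
    and vd: "val (coeff P d) = ereal vd"
    and psi_le: "\<forall>j<d. psi j \<le> val (coeff P j)"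
    and psi_dm1: "psi (d - 1) = ereal (vd - sL)"
    and psi_slope: "\<forall>j. 1 \<le> j \<longrightarrow> j < d \<longrightarrow> psi j \<le> psi (j - 1) + ereal sL"
    and psi_low: "\<forall>j<d. ereal (vd - sL * real d + sL * real j) \<le> psi j"
    and high: "\<forall>k>d. ereal (vd + (sL + \<kappa>) * (real k - real d)) \<le> val (coeff P k)"
    and kpos: "\<kappa> > 0"
begin

definition "cL = vd - sL * real d"
abbreviation "ad \<equiv> coeff P d"

lemma ad0: "ad \<noteq> 0" using vd by auto

definition NB :: "real \<Rightarrow> 'a poly \<Rightarrow> bool" where
  "NB c Q \<longleftrightarrow> degree Q < d \<and> (\<forall>j<d. psi j + ereal c \<le> val (coeff Q j))"

definition good :: "'a poly \<Rightarrow> bool" where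
  "good A \<longleftrightarrow> degree A = d \<and> coeff A d = ad \<and> (\<forall>j<d. psi j \<le> val (coeff A j))"

lemma NB_0[simp]: "NB c 0" using d1 by (simp add: NB_def)

lemma NB_add: "NB c p \<Longrightarrow> NB c q \<Longrightarrow> NB c (p + q)"
  unfolding NB_def using degree_add_le_max[of p q] by (auto intro!: val_add_ge)
lemma NB_minus: "NB c p \<Longrightarrow> NB c (- p)"
  unfolding NB_def by auto
lemma NB_diff: "NB c p \<Longrightarrow> NB c q \<Longrightarrow> NB c (p - q)"
  using NB_add[of c p "-q"] NB_minus[of c q] by simp
lemma NB_mono: "NB c p \<Longrightarrow> c' \<le> c \<Longrightarrow> NB c' p"
  unfolding NB_def by (meson add_left_mono ereal_less_eq(3) order_trans)
lemma NB_smult: "NB c p \<Longrightarrow> ereal e \<le> val a \<Longrightarrow> NB (c + e) (smult a p)"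
  unfolding NB_def
proof (intro conjI allI impI)
  assume h: "degree p < d \<and> (\<forall>j<d. psi j + ereal c \<le> val (coeff p j))" "ereal e \<le> val a"
  then show "degree (smult a p) < d" by (meson degree_smult_le le_less_trans)
  fix j assume "j < d"
  hence "psi j + ereal c + ereal e \<le> val (coeff p j) + val a" using h by (intro add_mono) auto
  moreover have "psi j + ereal (c + e) = psi j + ereal c + ereal e" by (simp add: add.assoc)
  moreover have "val (coeff (smult a p) j) = val (coeff p j) + val a" by (simp add: val_mult add.commute)
  ultimately show "psi j + ereal (c + e) \<le> val (coeff (smult a p) j)" by simp
qed

lemma good_nz: "good A \<Longrightarrow> A \<noteq> 0" using ad0 unfolding good_def by auto

lemma good_GB: "good A \<Longrightarrow> GB sL cL A"
  unfolding GB_def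
proof
  fix k assume g: "good A"
  show "ereal (cL + sL * real k) \<le> val (coeff A k)"
  proof (cases "k < d")
    case True
    then show ?thesis using g psi_low unfolding good_def cL_def
      by (metis (no_types, lifting) add.commute diff_add_eq order_trans)
  next
    case False
    show ?thesis
    proof (cases "k = d")
      case True then show ?thesis using g vd unfolding good_def cL_def by simp
    next
      case False
      hence "coeff A k = 0" using \<open>\<not> k < d\<close> g unfolding good_def by (simp add: coeff_eq_0)
      then show ?thesis by simp
    qed
  qed
qed

lemma good_lead: "good A \<Longrightarrow> val (coeff A d) = ereal (cL + sL * real d)"
  using vd unfolding good_def cL_def by simp

lemma DLg: "good A \<Longrightarrow> GB sL c R \<Longrightarrow> GB sL c (R mod A) \<and> GB sL (c - cL) (R div A)"
  using DL[of A d cL sL c R] good_GB[of A] good_lead[of A] unfolding good_def by auto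

lemma NB_GB: "NB c Q \<Longrightarrow> GB sL (cL + c) Q"
  unfolding GB_def
proof
  fix k assume h: "NB c Q"
  show "ereal (cL + c + sL * real k) \<le> val (coeff Q k)"
  proof (cases "k < d")
    case True
    have "ereal (cL + c + sL * real k) = ereal (vd - sL * real d + sL * real k) + ereal c"
      by (simp add: cL_def)
    also have "\<dots> \<le> psi k + ereal c" using psi_low True by (intro add_mono) auto
    also have "\<dots> \<le> val (coeff Q k)" using h True unfolding NB_def by auto
    finally show ?thesis .
  next
    case False
    hence "coeff Q k = 0" using h unfolding NB_def by (simp add: coeff_eq_0)
    then show ?thesis by simp
  qed
qed

lemma pCons0_mod: "(pCons 0 (X::'a poly)) mod A = (pCons 0 (X mod A)) mod A"
proof -
  have e: "\<And>Y::'a poly. pCons 0 Y = [:0, 1:] * Y" by simp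
  show ?thesis by (simp only: e[of X] e[of "X mod A"] mod_mult_right_eq)
qed

lemma MX: assumes g: "good A" and nq: "NB c Q"
  shows "NB (c - sL) ((pCons 0 Q) mod A)"
proof -
  define q where "q = coeff Q (d - 1)"
  define T where "T = pCons 0 Q - smult (q / ad) A"
  have dA: "degree A = d" and cA: "coeff A d = ad" and pA: "\<forall>j<d. psi j \<le> val (coeff A j)"
    using g unfolding good_def by auto
  have dQ: "degree Q < d" using nq unfolding NB_def by auto
  have "degree (pCons 0 Q) \<le> d" using dQ by (simp add: degree_pCons_le)
  moreover have "degree (smult (q / ad) A) \<le> d" using dA by (metis degree_smult_le)
  ultimately have dT: "degree T \<le> d" unfolding T_def by (meson degree_diff_le)
  have "coeff T d = 0" unfolding T_def using d1 ad0 cA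
    by (cases d) (auto simp: q_def)
  hence dT': "degree T < d"
  proof -
    assume c: "coeff T d = 0"
    show ?thesis
    proof (cases "T = 0")
      case True then show ?thesis using d1 by simp
    next
      case False
      then have "coeff T (degree T) \<noteq> 0" by simp
      hence "degree T \<noteq> d" using c by auto
      with dT show ?thesis by simp
    qed
  qed
  have eq: "pCons 0 Q = T + [:q / ad:] * A" unfolding T_def by simp
  have "(pCons 0 Q) mod A = T" unfolding eq mod_mult_self1 using dT' dA by (simp add: mod_poly_less)
  moreover have "NB (c - sL) T"
    unfolding NB_def
  proof (intro conjI allI impI)
    show "degree T < d" by fact
    fix j assume j: "j < d"
    have vq: "ereal (c - sL) \<le> val (q / ad)"
    proof -
      have "psi (d - 1) + ereal c \<le> val q"
        using nq d1 unfolding NB_def q_def by auto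
      hence a: "ereal (vd - sL + c) \<le> val q" using psi_dm1 by simp
      have "val (q / ad) = val q + ereal (- vd)"
        using ad0 vd by (simp add: divide_inverse val_mult val_inverse)
      moreover have "ereal (c - sL) = ereal (vd - sL + c) + ereal (- vd)" by simp
      ultimately show ?thesis using a by (metis add_right_mono)
    qed
    have t2: "psi j + ereal (c - sL) \<le> val (q / ad * coeff A j)"
    proof -
      have "ereal (c - sL) + psi j \<le> val (q / ad) + val (coeff A j)"
        using vq pA j by (intro add_mono) auto
      moreover have "val (q / ad * coeff A j) = val (q / ad) + val (coeff A j)" by (rule val_mult)
      ultimately show ?thesis by (simp only: add.commute)
    qed
    have t1: "psi j + ereal (c - sL) \<le> val (coeff (pCons 0 Q) j)"
    proof (cases j)
      case 0 then show ?thesis by simp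
    next
      case (Suc i)
      have "psi j + ereal (c - sL) \<le> psi (j - 1) + ereal sL + ereal (c - sL)"
        using psi_slope j Suc by (intro add_right_mono) auto
      also have "\<dots> = psi (j - 1) + ereal c" by (simp add: add.assoc)
      also have "\<dots> \<le> val (coeff Q i)" using nq j Suc unfolding NB_def by auto
      finally show ?thesis using Suc by simp
    qed
    have "coeff T j = coeff (pCons 0 Q) j - q / ad * coeff A j" unfolding T_def by simp
    then show "psi j + ereal (c - sL) \<le> val (coeff T j)" using t1 t2 by (simp add: val_diff_ge)
  qed
  ultimately show ?thesis by simp
qed

lemma GB_pCons: "GB l e (pCons a E) \<Longrightarrow> ereal e \<le> val a \<and> GB l (e + l) E"
  unfolding GB_def
proof (intro conjI allI)
  assume h: "\<forall>k. ereal (e + l * real k) \<le> val (coeff (pCons a E) k)"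
  show "ereal e \<le> val a" using h[rule_format, of 0] by simp
  fix k show "ereal (e + l + l * real k) \<le> val (coeff E k)"
    using h[rule_format, of "Suc k"] by (simp add: algebra_simps)
qed

lemma MP: assumes g: "good A" and nq: "NB c Q"
  shows "GB sL e E \<Longrightarrow> NB (c + e) ((E * Q) mod A)"
proof (induction E arbitrary: e rule: pCons_induct)
  case 0 then show ?case by simp
next
  case (pCons a E)
  from GB_pCons[OF pCons.prems] have va: "ereal e \<le> val a" and gE: "GB sL (e + sL) E" by auto
  have n1: "NB (c + (e + sL)) ((E * Q) mod A)" using pCons.IH[OF gE] .
  have n2: "NB (c + e) ((pCons 0 ((E * Q) mod A)) mod A)"
    using MX[OF g n1] by (simp add: algebra_simps)
  have n3: "NB (c + e) (smult a Q)" using NB_smult[OF nq va] .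
  have dA: "degree A = d" using g unfolding good_def by auto
  have "pCons a E * Q = smult a Q + pCons 0 (E * Q)" by (simp add: mult_pCons_left)
  hence "(pCons a E * Q) mod A = (smult a Q) mod A + (pCons 0 (E * Q)) mod A"
    by (simp add: poly_mod_add_left)
  also have "(smult a Q) mod A = smult a Q" using n3 dA unfolding NB_def by (simp add: mod_poly_less)
  also have "(pCons 0 (E * Q)) mod A = (pCons 0 ((E * Q) mod A)) mod A" by (rule pCons0_mod)
  finally show ?case using NB_add[OF n3 n2] by simp
qed

end


lemma ring_id1: "(Q::'b::comm_ring_1) * A + R = (- (R * (Q * V - 1 - k * A)) - (Q * c - R * k) * (V * R - c * A)) + (Q + Q * c - R * k) * (A + (V * R - c * A))"
  by (simp add: algebra_simps)
lemma ring_id2: "(B::'b::comm_ring_1) * (2 * V - V ^ 2 * B) - 1 = - ((B * V - 1) * (B * V - 1))"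
  by (simp add: algebra_simps power2_eq_square)
lemma ring_id3: "(Q::'b::comm_ring_1) * A + R = B * (A + D) + S \<Longrightarrow> (B - Q) * (A + D) = R - Q * D - S"
  by (simp add: algebra_simps)
lemma ring_id5: "(V::'b::comm_ring_1) + V - V * V * B = 2 * V - V ^ 2 * B"
  by (simp add: algebra_simps power2_eq_square mult_2)
lemma ring_id4: "(B::'b::comm_ring_1) * V - 1 = ((B - Q) * V + (Q * V - 1 - k * A) - k * D) + k * (A + D)"
  by (simp add: algebra_simps)

context nsetup begin

lemma le_add_pos: "0 \<le> e \<Longrightarrow> (x::ereal) \<le> x + ereal e"
  by (cases x) auto

lemma GB_P: "GB sL cL P"
  unfolding GB_def
proof
  fix k
  show "ereal (cL + sL * real k) \<le> val (coeff P k)"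
  proof (cases "k < d")
    case True
    then show ?thesis using psi_low psi_le unfolding cL_def
      by (metis (no_types, lifting) add.commute diff_add_eq order_trans)
  next
    case False
    show ?thesis
    proof (cases "k = d")
      case True then show ?thesis using vd unfolding cL_def by simp
    next
      case False
      hence k: "k > d" using \<open>\<not> k < d\<close> by simp
      have "cL + sL * real k \<le> vd + (sL + \<kappa>) * (real k - real d)"
        using k kpos unfolding cL_def by (simp add: algebra_simps)
      then show ?thesis using high k by (meson ereal_less_eq(3) order_trans)
    qed
  qed
qed

lemma Q_GB: "good A \<Longrightarrow> GB sL 0 (P div A)"
  using DLg[OF _ GB_P, of A] by simp

definition Inv :: "'a poly \<Rightarrow> 'a poly \<Rightarrow> real \<Rightarrow> bool" where
  "Inv A V e \<longleftrightarrow> good A \<and> GB sL 0 V \<and> NB e (P mod A) \<and> GB sL e ((P div A * V - 1) mod A)"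

lemma step:
  assumes inv: "Inv A V e" and e0: "0 \<le> e"
  defines "A' \<equiv> A + (V * P) mod A"
  defines "B' \<equiv> P div A'"
  defines "V' \<equiv> (2 * V - V ^ 2 * B') mod A'"
  shows "Inv A' V' (2 * e) \<and> NB e ((V * P) mod A)"
proof -
  define R where "R = P mod A"
  define Q where "Q = P div A"
  define F where "F = (Q * V - 1) mod A"
  define \<delta> where "\<delta> = (V * P) mod A"
  have gA: "good A" and gV: "GB sL 0 V" and nR: "NB e R" and gF: "GB sL e F"
    using inv unfolding Inv_def R_def Q_def F_def by auto
  have A0: "A \<noteq> 0" using good_nz[OF gA] .
  have dA: "degree A = d" using gA unfolding good_def by auto
  have gQ: "GB sL 0 Q" unfolding Q_def using Q_GB[OF gA] .
  have \<delta>R: "\<delta> = (V * R) mod A" unfolding \<delta>_def R_def by (simp add: mod_mult_right_eq)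
  have nd: "NB e \<delta>" using MP[OF gA nR gV] \<delta>R by simp
  have gR: "GB sL (cL + e) R" using NB_GB[OF nR] .
  have gd: "GB sL (cL + e) \<delta>" using NB_GB[OF nd] .
  have dd: "degree \<delta> < d" using nd unfolding NB_def by auto
  have A'd: "A' = A + \<delta>" unfolding A'_def \<delta>_def ..
  have gA': "good A'"
    unfolding good_def A'd
  proof (intro conjI allI impI)
    show "degree (A + \<delta>) = d" using dd dA by (simp add: degree_add_eq_left)
    show "coeff (A + \<delta>) d = ad" using dd gA unfolding good_def by (simp add: coeff_eq_0)
    fix j assume j: "j < d"
    have "psi j \<le> val (coeff A j)" using gA j unfolding good_def by auto
    moreover have "psi j \<le> val (coeff \<delta> j)"
      using nd j e0 unfolding NB_def by (meson le_add_pos order_trans)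
    ultimately show "psi j \<le> val (coeff (A + \<delta>) j)" by (simp add: val_add_ge)
  qed
  have A'0: "A' \<noteq> 0" using good_nz[OF gA'] .
  define c where "c = (V * R) div A"
  define k where "k = (Q * V - 1) div A"
  have e1: "P = Q * A + R" unfolding Q_def R_def by simp
  have e2: "\<delta> = V * R - c * A" unfolding c_def \<delta>R by (simp add: minus_div_mult_eq_mod[symmetric])
  have e3: "F = Q * V - 1 - k * A" unfolding k_def F_def by (simp add: minus_div_mult_eq_mod[symmetric])
  have gQV1: "GB sL 0 (Q * V - 1)"
  proof -
    have "GB sL (0 + 0) (Q * V)" by (rule GB_mult[OF gQ gV])
    moreover have "GB sL 0 1" by (rule GB_1) simp
    ultimately show ?thesis by (simp add: GB_diff)
  qed
  have gk: "GB sL (- cL) k" unfolding k_def using DLg[OF gA gQV1] by simp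
  have gVR: "GB sL (cL + e) (V * R)" using GB_mult[OF gV gR] by simp
  have gc: "GB sL e c" unfolding c_def using DLg[OF gA gVR] by simp
  have gQc: "GB sL e (Q * c)" using GB_mult[OF gQ gc] by simp
  have gRk: "GB sL e (R * k)" using GB_mult[OF gR gk] by simp
  have gW: "GB sL e (Q * c - R * k)" using GB_diff[OF gQc gRk] .
  define X where "X = - (R * F) - (Q * c - R * k) * \<delta>"
  have PX: "P = X + (Q + Q * c - R * k) * A'"
    unfolding X_def A'd e1 e2 e3 by (rule ring_id1)
  have R'X: "P mod A' = - ((F * R) mod A') - ((Q * c - R * k) * \<delta>) mod A'"
  proof -
    have "P mod A' = X mod A'" by (subst PX) (simp only: mod_mult_self1)
    also have "\<dots> = - ((F * R) mod A') - ((Q * c - R * k) * \<delta>) mod A'"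
      unfolding X_def by (simp add: poly_mod_diff_left mult.commute)
    finally show ?thesis .
  qed
  have nR': "NB (2 * e) (P mod A')"
  proof -
    have "NB (e + e) ((F * R) mod A')" using MP[OF gA' nR gF] .
    moreover have "NB (e + e) (((Q * c - R * k) * \<delta>) mod A')" using MP[OF gA' nd gW] .
    ultimately have "NB (e + e) (- ((F * R) mod A') - ((Q * c - R * k) * \<delta>) mod A')"
      by (intro NB_diff NB_minus)
    moreover have "e + e = 2 * e" by simp
    ultimately show ?thesis unfolding R'X by metis
  qed
  have gB': "GB sL 0 B'" unfolding B'_def using Q_GB[OF gA'] .
  have gV': "GB sL 0 V'"
  proof -
    have "GB sL (0 + 0 + 0) (V * V * B')" by (intro GB_mult gV gB')
    hence a: "GB sL 0 (V * V * B')" by simp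
    have "GB sL 0 (V + V - V * V * B')" by (intro GB_diff GB_add gV a)
    moreover have "V + V - V * V * B' = 2 * V - V ^ 2 * B'" by (rule ring_id5)
    ultimately have "GB sL 0 (2 * V - V ^ 2 * B')" by metis
    thus ?thesis unfolding V'_def using DLg[OF gA'] by blast
  qed
  define G where "G = (B' * V - 1) mod A'"
  have F'eq: "(P div A' * V' - 1) mod A' = - ((G * G) mod A')"
  proof -
    have "(P div A' * V' - 1) mod A' = (B' * (2 * V - V ^ 2 * B') - 1) mod A'"
      unfolding B'_def[symmetric] V'_def by (metis mod_diff_left_eq mod_mult_right_eq)
    also have "B' * (2 * V - V ^ 2 * B') - 1 = - ((B' * V - 1) * (B' * V - 1))"
      by (rule ring_id2)
    also have "(- ((B' * V - 1) * (B' * V - 1))) mod A' = - ((G * G) mod A')"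
      unfolding G_def by (simp add: mod_mult_eq)
    finally show ?thesis .
  qed
  have gBQ: "GB sL e (B' - Q)"
  proof -
    have eqP: "P = B' * A' + P mod A'" unfolding B'_def by simp
    have "(B' - Q) * A' = R - Q * \<delta> - P mod A'"
      using e1 eqP unfolding A'd by (intro ring_id3) simp
    hence "B' - Q = (R - Q * \<delta> - P mod A') div A'" using A'0
      by (metis nonzero_mult_div_cancel_right)
    moreover have "GB sL (cL + e) (R - Q * \<delta> - P mod A')"
    proof -
      have "GB sL (0 + (cL + e)) (Q * \<delta>)" by (rule GB_mult[OF gQ gd])
      moreover have "GB sL (cL + e) (P mod A')"
        using GB_mono[OF NB_GB[OF nR']] e0 by simp
      ultimately show ?thesis using gR by (simp add: GB_diff)
    qed
    ultimately show ?thesis using DLg[OF gA'] by (metis add_diff_cancel_left')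
  qed
  have gG: "GB sL e G"
  proof -
    have "B' * V - 1 = ((B' - Q) * V + F - k * \<delta>) + k * A'"
      unfolding A'd e3 by (rule ring_id4)
    hence "G = ((B' - Q) * V + F - k * \<delta>) mod A'" unfolding G_def by (simp only: mod_mult_self1)
    moreover have "GB sL e ((B' - Q) * V + F - k * \<delta>)"
    proof -
      have "GB sL (e + 0) ((B' - Q) * V)" by (rule GB_mult[OF gBQ gV])
      moreover have "GB sL (- cL + (cL + e)) (k * \<delta>)" by (rule GB_mult[OF gk gd])
      ultimately show ?thesis using gF by (simp add: GB_add GB_diff)
    qed
    ultimately show ?thesis using DLg[OF gA'] by blast
  qed
  have gF': "GB sL (2 * e) ((P div A' * V' - 1) mod A')"
  proof -
    have "GB sL (e + e) (G * G)" by (rule GB_mult[OF gG gG])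
    hence "GB sL (e + e) ((G * G) mod A')" using DLg[OF gA'] by blast
    moreover have "e + e = 2 * e" by simp
    ultimately have "GB sL (2 * e) ((G * G) mod A')" by metis
    thus ?thesis unfolding F'eq by (rule GB_minus)
  qed
  show ?thesis
    unfolding Inv_def using gA' gV' nR' gF' nd \<delta>_def by auto
qed

end


lemma ring_id6: "(P::'b::comm_ring_1) = A0 + M * H \<Longrightarrow> M = T + c * A0 \<Longrightarrow> P = H * T + (1 + H * c) * A0"
  by (simp add: algebra_simps)

lemma A_seq_0: "A_seq P d 0 = (\<Sum>i\<le>d. monom (coeff P i) i)"
  by (simp add: A_seq_def)
lemma V_seq_0: "V_seq P d 0 = 1"
  by (simp add: V_seq_def)
lemma A_seq_Suc: "A_seq P d (Suc i) = A_seq P d i + (V_seq P d i * P) mod A_seq P d i"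
  by (simp only: A_seq_def V_seq_def AV_seq.simps Let_def fst_conv snd_conv)
lemma V_seq_Suc: "V_seq P d (Suc i) = (2 * V_seq P d i - V_seq P d i ^ 2 * (P div A_seq P d (Suc i))) mod A_seq P d (Suc i)"
  by (simp only: A_seq_def V_seq_def AV_seq.simps Let_def fst_conv snd_conv)

lemma coeff_A0: "coeff (\<Sum>i\<le>d. monom (coeff P i) i) j = (if j \<le> d then coeff P j else 0)"
  by (simp add: coeff_sum coeff_monom)

context dvf begin
lemma GB_const: "ereal c \<le> val a \<Longrightarrow> GB l c [:a:]"
  by (auto simp: GB_def coeff_pCons split: nat.split)
end

context nsetup begin

abbreviation "A0 \<equiv> (\<Sum>i\<le>d. monom (coeff P i) i)"

lemma good_A0: "good A0"
  unfolding good_def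
proof (intro conjI allI impI)
  have "degree A0 \<le> d" by (rule degree_le) (simp add: coeff_A0)
  moreover have "d \<le> degree A0" by (rule le_degree) (simp add: coeff_A0 ad0)
  ultimately show "degree A0 = d" by simp
  show "coeff A0 d = ad" by (simp add: coeff_A0)
  fix j assume "j < d" then show "psi j \<le> val (coeff A0 j)" using psi_le by (simp add: coeff_A0)
qed

lemma base: "Inv A0 1 \<kappa>"
proof -
  define H where "H = poly_shift d (P - A0)"
  define T where "T = monom 1 d - smult (inverse ad) A0"
  have gA0: "good A0" by (rule good_A0)
  have A00: "A0 \<noteq> 0" using good_nz[OF gA0] .
  have dA0: "degree A0 = d" using gA0 unfolding good_def by auto
  have PH: "P = A0 + monom 1 d * H"
  proof (rule poly_eqI)
    fix k
    show "coeff P k = coeff (A0 + monom 1 d * H) k"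
      by (cases "k < d") (auto simp: coeff_monom_mult H_def coeff_A0 coeff_poly_shift)
  qed
  have MT: "monom 1 d = T + [:inverse ad:] * A0" unfolding T_def by simp
  have PT: "P = H * T + (1 + H * [:inverse ad:]) * A0" by (rule ring_id6[OF PH MT])
  have nT: "NB (- vd) T"
    unfolding NB_def
  proof (intro conjI allI impI)
    have dT: "degree T \<le> d" unfolding T_def using dA0
      by (metis degree_diff_le degree_monom_le degree_smult_le)
    have "coeff T d = 0" unfolding T_def using ad0 by (simp add: coeff_A0)
    show "degree T < d"
    proof (cases "T = 0")
      case True then show ?thesis using d1 by simp
    next
      case False
      then have "coeff T (degree T) \<noteq> 0" by simp
      with \<open>coeff T d = 0\<close> have "degree T \<noteq> d" by auto
      with dT show ?thesis by simp
    qed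
    fix j assume j: "j < d"
    have "coeff T j = - (inverse ad * coeff P j)" unfolding T_def using j by (simp add: coeff_A0)
    moreover have "val (inverse ad * coeff P j) = ereal (- vd) + val (coeff P j)"
      using ad0 vd by (simp add: val_mult val_inverse)
    moreover have "psi j + ereal (- vd) \<le> ereal (- vd) + val (coeff P j)"
    proof -
      have "psi j + ereal (- vd) \<le> val (coeff P j) + ereal (- vd)"
        using psi_le j by (intro add_right_mono) auto
      thus ?thesis by (simp add: add.commute)
    qed
    ultimately show "psi j + ereal (- vd) \<le> val (coeff T j)" by simp
  qed
  have gH: "GB sL (vd + \<kappa>) H"
    unfolding GB_def
  proof
    fix m
    show "ereal (vd + \<kappa> + sL * real m) \<le> val (coeff H m)"
    proof (cases m)
      case 0 then show ?thesis by (simp add: H_def coeff_A0 coeff_poly_shift)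
    next
      case (Suc m')
      have "coeff H m = coeff P (m + d)" unfolding H_def using Suc by (simp add: coeff_A0 coeff_poly_shift)
      moreover have "ereal (vd + (sL + \<kappa>) * (real (m + d) - real d)) \<le> val (coeff P (m + d))"
      proof -
        have "m + d > d" using Suc by simp
        thus ?thesis using high by blast
      qed
      moreover have "ereal (vd + \<kappa> + sL * real m) \<le> ereal (vd + (sL + \<kappa>) * (real (m + d) - real d))"
        using Suc kpos by (simp add: algebra_simps)
      ultimately show ?thesis by (metis order_trans)
    qed
  qed
  have modP: "P mod A0 = (H * T) mod A0"
    using arg_cong[where f="\<lambda>z. z mod A0", OF PT] by (simp only: mod_mult_self1)
  have divP: "P div A0 = (1 + H * [:inverse ad:]) + (H * T) div A0"
    using arg_cong[where f="\<lambda>z. z div A0", OF PT] by (simp only: div_mult_self1[OF A00])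
  have nR: "NB \<kappa> (P mod A0)"
    using MP[OF gA0 nT gH] unfolding modP by simp
  have gF: "GB sL \<kappa> ((P div A0 * 1 - 1) mod A0)"
  proof -
    have "P div A0 * 1 - 1 = H * [:inverse ad:] + (H * T) div A0" unfolding divP by simp
    moreover have "GB sL \<kappa> (H * [:inverse ad:])"
    proof -
      have "GB sL (- vd) [:inverse ad:]" using ad0 vd by (intro GB_const) (simp add: val_inverse)
      from GB_mult[OF gH this] show ?thesis by simp
    qed
    moreover have "GB sL \<kappa> ((H * T) div A0)"
    proof -
      have "GB sL (vd + \<kappa> + (cL + - vd)) (H * T)" by (rule GB_mult[OF gH NB_GB[OF nT]])
      hence "GB sL (cL + \<kappa>) (H * T)" by (simp add: algebra_simps)
      from DLg[OF gA0 this] show ?thesis by simp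
    qed
    ultimately have "GB sL \<kappa> (P div A0 * 1 - 1)" by (simp add: GB_add)
    thus ?thesis using DLg[OF gA0] by blast
  qed
  show ?thesis unfolding Inv_def using gA0 nR gF GB_1[of 0 sL] by simp
qed

lemma seq_inv: "Inv (A_seq P d i) (V_seq P d i) (2 ^ i * \<kappa>)
   \<and> NB (2 ^ i * \<kappa>) (A_seq P d (Suc i) - A_seq P d i)"
proof (induction i)
  case 0
  have "Inv (A_seq P d 0) (V_seq P d 0) \<kappa>" using base by (simp add: A_seq_0 V_seq_0)
  with step[OF this] kpos show ?case
    by (simp add: A_seq_Suc V_seq_Suc A_seq_0 V_seq_0)
next
  case (Suc i)
  have inv: "Inv (A_seq P d (Suc i)) (V_seq P d (Suc i)) (2 ^ Suc i * \<kappa>)"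
    using step[OF conjunct1[OF Suc.IH]] kpos
    unfolding A_seq_Suc[of P d i] V_seq_Suc[of P d i] by (simp add: A_seq_Suc mult.assoc)
  have "NB (2 ^ Suc i * \<kappa>) (A_seq P d (Suc (Suc i)) - A_seq P d (Suc i))"
    using step[OF inv] kpos unfolding A_seq_Suc[of P d "Suc i"] by simp
  with inv show ?case by simp
qed

end


lemma ereal_min_int_bound:
  fixes X y :: ereal
  assumes "\<And>M::int. min X (ereal (of_int M)) \<le> y"
  shows "X \<le> y"
proof (cases X)
  case (real r)
  have "min X (ereal (of_int \<lceil>r\<rceil>)) \<le> y" by (rule assms)
  moreover have "min X (ereal (of_int \<lceil>r\<rceil>)) = X" using real by (simp add: min_def)
  ultimately show ?thesis by simp
next
  case PInf
  show ?thesis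
  proof (cases y)
    case (real s)
    have "min X (ereal (of_int (\<lceil>s\<rceil> + 1))) \<le> y" by (rule assms)
    with PInf real have "of_int (\<lceil>s\<rceil> + 1) \<le> s" by simp
    then show ?thesis by linarith
  next
    case PInf then show ?thesis by simp
  next
    case MInf
    have "min X (ereal (of_int 0)) \<le> y" by (rule assms)
    with PInf MInf show ?thesis by simp
  qed
next
  case MInf then show ?thesis by simp
qed

lemma two_pow_large: assumes "(k::real) > 0" shows "\<exists>N. \<forall>n\<ge>N. X \<le> 2 ^ n * k"
proof -
  obtain N :: nat where N: "X / k \<le> real N" using real_arch_simple by blast
  have "\<forall>n\<ge>N. X \<le> 2 ^ n * k"
  proof (intro allI impI)
    fix n assume n: "N \<le> n"
    have "real N \<le> real n" using n by simp
    also have "real n \<le> 2 ^ n"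
    proof -
      have "n < 2 ^ n" by (rule less_exp)
      hence "real n < real (2 ^ n)" by (simp only: of_nat_less_iff)
      thus ?thesis by simp
    qed
    finally have "real N \<le> 2 ^ n" .
    hence "X / k \<le> 2 ^ n" using N by linarith
    thus "X \<le> 2 ^ n * k" using assms by (simp add: divide_le_eq)
  qed
  thus ?thesis by blast
qed

context nsetup begin

lemma seq_good: "good (A_seq P d i)"
  using seq_inv[of i] unfolding Inv_def by auto

lemma seq_high: "j \<ge> d \<Longrightarrow> coeff (A_seq P d i) j = (if j = d then ad else 0)"
  using seq_good[of i] unfolding good_def by (auto simp: coeff_eq_0)

lemma tail: "n \<le> m \<Longrightarrow> j < d \<Longrightarrow> psi j + ereal (2 ^ n * \<kappa>) \<le> val (coeff (A_seq P d m - A_seq P d n) j)"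
proof (induction m rule: dec_induct)
  case base then show ?case by simp
next
  case (step m)
  have a: "psi j + ereal (2 ^ n * \<kappa>) \<le> psi j + ereal (2 ^ m * \<kappa>)"
    using step.hyps(1) kpos by (intro add_left_mono) (simp add: power_increasing)
  have "psi j + ereal (2 ^ m * \<kappa>) \<le> val (coeff (A_seq P d (Suc m) - A_seq P d m) j)"
    using conjunct2[OF seq_inv[of m]] step.prems unfolding NB_def by auto
  hence b: "psi j + ereal (2 ^ n * \<kappa>) \<le> val (coeff (A_seq P d (Suc m) - A_seq P d m) j)"
    using a by simp
  have "A_seq P d (Suc m) - A_seq P d n = (A_seq P d (Suc m) - A_seq P d m) + (A_seq P d m - A_seq P d n)"
    by simp
  moreover have c: "psi j + ereal (2 ^ n * \<kappa>) \<le> val (coeff (A_seq P d m - A_seq P d n) j)"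
    using step.IH step.prems by simp
  ultimately show ?case using b by (simp only: coeff_add val_add_ge)
qed

lemma psi_fin: "j < d \<Longrightarrow> ereal (cL + sL * real j) \<le> psi j"
  using psi_low unfolding cL_def by auto

lemma cauchy: "\<forall>M::int. \<exists>N. \<forall>m\<ge>N. \<forall>n\<ge>N. ereal (of_int M) \<le> val (coeff (A_seq P d m) j - coeff (A_seq P d n) j)"
proof
  fix M :: int
  show "\<exists>N. \<forall>m\<ge>N. \<forall>n\<ge>N. ereal (of_int M) \<le> val (coeff (A_seq P d m) j - coeff (A_seq P d n) j)"
  proof (cases "j < d")
    case False
    then show ?thesis using seq_high[of j] by simp
  next
    case True
    obtain N where N: "\<forall>n\<ge>N. of_int M - (cL + sL * real j) \<le> 2 ^ n * \<kappa>"
      using two_pow_large[OF kpos] by blast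
    have key: "ereal (of_int M) \<le> val (coeff (A_seq P d m) j - coeff (A_seq P d n) j)"
      if "N \<le> n" "n \<le> m" for m n
    proof -
      have "real_of_int M \<le> cL + sL * real j + 2 ^ n * \<kappa>"
        using N[rule_format, OF that(1)] by linarith
      hence "ereal (of_int M) \<le> ereal (cL + sL * real j) + ereal (2 ^ n * \<kappa>)"
        by simp
      also have "\<dots> \<le> psi j + ereal (2 ^ n * \<kappa>)" using psi_fin[OF True] by (rule add_right_mono)
      also have "\<dots> \<le> val (coeff (A_seq P d m - A_seq P d n) j)" using tail that True by blast
      finally show ?thesis by simp
    qed
    have "\<forall>m\<ge>N. \<forall>n\<ge>N. ereal (of_int M) \<le> val (coeff (A_seq P d m) j - coeff (A_seq P d n) j)"
    proof (intro allI impI)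
      fix m n assume "N \<le> m" "N \<le> n"
      show "ereal (of_int M) \<le> val (coeff (A_seq P d m) j - coeff (A_seq P d n) j)"
      proof (cases "n \<le> m")
        case True then show ?thesis using key \<open>N \<le> n\<close> by blast
      next
        case False
        then have "ereal (of_int M) \<le> val (coeff (A_seq P d n) j - coeff (A_seq P d m) j)"
          using key \<open>N \<le> m\<close> by simp
        moreover have "coeff (A_seq P d n) j - coeff (A_seq P d m) j = - (coeff (A_seq P d m) j - coeff (A_seq P d n) j)"
          by simp
        ultimately show ?thesis by (simp only: val_minus)
      qed
    qed
    then show ?thesis by blast
  qed
qed

definition "Lm j = (SOME l. \<forall>M::int. \<exists>N. \<forall>n\<ge>N. ereal (of_int M) \<le> val (coeff (A_seq P d n) j - l))"

lemma Lm: "\<forall>M::int. \<exists>N. \<forall>n\<ge>N. ereal (of_int M) \<le> val (coeff (A_seq P d n) j - Lm j)"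
  unfolding Lm_def using val_complete[OF cauchy[of j]] by (rule someI_ex)

definition "Ainf = (\<Sum>j<d. monom (Lm j) j) + monom ad d"

lemma coeff_Ainf: "coeff Ainf j = (if j < d then Lm j else if j = d then ad else 0)"
  by (auto simp: Ainf_def coeff_sum coeff_monom)

lemma rate: "j < d \<Longrightarrow> psi j + ereal (2 ^ i * \<kappa>) \<le> val (coeff (Ainf - A_seq P d i) j)"
proof -
  assume j: "j < d"
  show ?thesis
  proof (rule ereal_min_int_bound)
    fix M :: int
    obtain N where N: "\<forall>n\<ge>N. ereal (of_int M) \<le> val (coeff (A_seq P d n) j - Lm j)" using Lm by blast
    define n where "n = max N i"
    have a: "ereal (of_int M) \<le> val (coeff (A_seq P d n) j - Lm j)" using N n_def by simp
    have b: "psi j + ereal (2 ^ i * \<kappa>) \<le> val (coeff (A_seq P d n - A_seq P d i) j)"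
      using tail[of i n j] j n_def by simp
    have "coeff (Ainf - A_seq P d i) j = coeff (A_seq P d n - A_seq P d i) j - (coeff (A_seq P d n) j - Lm j)"
      using j by (simp add: coeff_Ainf)
    moreover have "min (psi j + ereal (2 ^ i * \<kappa>)) (ereal (of_int M)) \<le>
        val (coeff (A_seq P d n - A_seq P d i) j - (coeff (A_seq P d n) j - Lm j))"
      using a b by (meson min.cobounded1 min.cobounded2 order_trans val_diff_ge)
    ultimately show "min (psi j + ereal (2 ^ i * \<kappa>)) (ereal (of_int M)) \<le> val (coeff (Ainf - A_seq P d i) j)"
      by simp
  qed
qed

lemma good_Ainf: "good Ainf"
  unfolding good_def
proof (intro conjI allI impI)
  have "degree Ainf \<le> d" by (rule degree_le) (simp add: coeff_Ainf)
  moreover have "d \<le> degree Ainf" by (rule le_degree) (simp add: coeff_Ainf ad0)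
  ultimately show "degree Ainf = d" by simp
  show "coeff Ainf d = ad" by (simp add: coeff_Ainf)
  fix j assume j: "j < d"
  have "psi j \<le> psi j + ereal (2 ^ 0 * \<kappa>)" using kpos by (simp add: le_add_pos)
  also have "\<dots> \<le> val (coeff (Ainf - A_seq P d 0) j)" by (rule rate[OF j])
  finally have a: "psi j \<le> val (coeff Ainf j - coeff (A_seq P d 0) j)" by simp
  have b: "psi j \<le> val (coeff (A_seq P d 0) j)" using seq_good[of 0] j unfolding good_def by auto
  have "coeff Ainf j = (coeff Ainf j - coeff (A_seq P d 0) j) + coeff (A_seq P d 0) j" by simp
  then show "psi j \<le> val (coeff Ainf j)" using a b by (metis val_add_ge)
qed

lemma D_NB: "NB (2 ^ i * \<kappa>) (Ainf - A_seq P d i)"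
  unfolding NB_def
proof (intro conjI allI impI)
  show "degree (Ainf - A_seq P d i) < d"
  proof -
    have "\<forall>j\<ge>d. coeff (Ainf - A_seq P d i) j = 0" using seq_high[of _ i] by (simp add: coeff_Ainf)
    hence "degree (Ainf - A_seq P d i) \<le> d - 1" by (intro degree_le) (use d1 in auto)
    thus ?thesis using d1 by simp
  qed
  fix j assume "j < d" then show "psi j + ereal (2 ^ i * \<kappa>) \<le> val (coeff (Ainf - A_seq P d i) j)"
    by (rule rate)
qed

lemma Ainf_dvd: "Ainf dvd P"
proof -
  have gB: "GB sL (cL + 2 ^ i * \<kappa>) (P mod Ainf)" for i
  proof -
    have inv: "Inv (A_seq P d i) (V_seq P d i) (2 ^ i * \<kappa>)" using seq_inv by blast
    define Ai where "Ai = A_seq P d i"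
    define D where "D = Ainf - Ai"
    have gAi: "good Ai" using inv unfolding Inv_def Ai_def by auto
    have eq: "P = (P mod Ai - P div Ai * D) + P div Ai * Ainf"
      unfolding D_def by (simp add: algebra_simps)
    have "P mod Ainf = (P mod Ai - P div Ai * D) mod Ainf"
      using arg_cong[where f="\<lambda>z. z mod Ainf", OF eq] by (simp only: mod_mult_self1)
    moreover have "GB sL (cL + 2 ^ i * \<kappa>) (P mod Ai - P div Ai * D)"
    proof -
      have "GB sL (cL + 2 ^ i * \<kappa>) (P mod Ai)" using NB_GB inv unfolding Inv_def Ai_def by blast
      moreover have "GB sL (0 + (cL + 2 ^ i * \<kappa>)) (P div Ai * D)"
      proof -
        have nD: "NB (2 ^ i * \<kappa>) D" unfolding D_def Ai_def by (rule D_NB)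
        show ?thesis by (rule GB_mult[OF Q_GB[OF gAi] NB_GB[OF nD]])
      qed
      ultimately show ?thesis by (simp add: GB_diff)
    qed
    ultimately show ?thesis using DLg[OF good_Ainf] by metis
  qed
  have "P mod Ainf = 0"
  proof (rule poly_eqI)
    fix k
    have "coeff (P mod Ainf) k = 0"
    proof (rule val_ge_all)
      fix M :: int
      obtain N where N: "\<forall>n\<ge>N. of_int M - cL - sL * real k \<le> 2 ^ n * \<kappa>"
        using two_pow_large[OF kpos] by blast
      have "ereal (cL + 2 ^ N * \<kappa> + sL * real k) \<le> val (coeff (P mod Ainf) k)"
        using gB[of N] unfolding GB_def by blast
      moreover have "of_int M \<le> cL + 2 ^ N * \<kappa> + sL * real k" using N by force
      ultimately show "ereal (of_int M) \<le> val (coeff (P mod Ainf) k)"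
        by (meson ereal_less_eq(3) order_trans)
    qed
    thus "coeff (P mod Ainf) k = coeff 0 k" by simp
  qed
  thus ?thesis by (simp add: mod_eq_0_iff_dvd)
qed

lemma main_result:
  "(\<forall>i. degree (A_seq P d i) = d \<and> lead_coeff (A_seq P d i) = ad)
   \<and> (\<exists>Ainf. poly_val_converges val (A_seq P d) Ainf \<and> Ainf dvd P \<and> degree Ainf = d
       \<and> lead_coeff Ainf = ad
       \<and> (\<forall>j<d. coeff Ainf j = coeff P j \<or> psi j < val (coeff Ainf j - coeff P j))
       \<and> (\<forall>i. \<forall>j<d. psi j + ereal (2 ^ i * \<kappa>) \<le> val (coeff (Ainf - A_seq P d i) j)))"
proof -
  have p1: "\<forall>i. degree (A_seq P d i) = d \<and> lead_coeff (A_seq P d i) = ad"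
    using seq_good unfolding good_def by auto
  have p2: "poly_val_converges val (A_seq P d) Ainf"
    unfolding poly_val_converges_def
  proof (intro allI)
    fix j and M :: int
    show "\<exists>N. \<forall>i\<ge>N. ereal (of_int M) \<le> val (coeff (A_seq P d i) j - coeff Ainf j)"
    proof (cases "j < d")
      case True then show ?thesis using Lm[of j] by (simp add: coeff_Ainf)
    next
      case False then show ?thesis using seq_high[of j] by (simp add: coeff_Ainf)
    qed
  qed
  have p3: "degree Ainf = d" "lead_coeff Ainf = ad" using good_Ainf unfolding good_def by auto
  have p4: "\<forall>j<d. coeff Ainf j = coeff P j \<or> psi j < val (coeff Ainf j - coeff P j)"
  proof (intro allI impI)
    fix j assume j: "j < d"
    have r: "psi j + ereal (2 ^ 0 * \<kappa>) \<le> val (coeff Ainf j - coeff P j)"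
      using rate[OF j, of 0] j by (simp add: A_seq_0 coeff_A0)
    show "coeff Ainf j = coeff P j \<or> psi j < val (coeff Ainf j - coeff P j)"
    proof (cases "psi j")
      case PInf
      then have "val (coeff Ainf j - coeff P j) = \<infinity>" using r by simp
      then show ?thesis using val_inf_iff by simp
    next
      case (real r0)
      have "ereal r0 < ereal (r0 + \<kappa>)" using kpos by simp
      also have "\<dots> \<le> val (coeff Ainf j - coeff P j)" using r real by simp
      finally show ?thesis using real by simp
    next
      case MInf then show ?thesis using psi_fin[OF j] by simp
    qed
  qed
  have p5: "\<forall>i. \<forall>j<d. psi j + ereal (2 ^ i * \<kappa>) \<le> val (coeff (Ainf - A_seq P d i) j)"
    using rate by blast
  show ?thesis using p1 p2 p3 p4 p5 Ainf_dvd by blast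
qed

end


lemma alg_below_left:
  fixes j x k yj yk a s :: real
  assumes "j < x" "x < k" "yj < a + s * j" "yk = a + s * k"
  shows "yj + (yk - yj) * (x - j) / (k - j) < a + s * x"
proof -
  have kj: "k - j > 0" using assms by simp
  have "yj * (k - x) + yk * (x - j) < (a + s * j) * (k - x) + yk * (x - j)"
    using assms by (intro add_strict_right_mono mult_strict_right_mono) auto
  also have "\<dots> = (a + s * x) * (k - j)" using assms by (simp add: algebra_simps)
  finally have "yj * (k - x) + yk * (x - j) < (a + s * x) * (k - j)" .
  moreover have "yj + (yk - yj) * (x - j) / (k - j) = (yj * (k - x) + yk * (x - j)) / (k - j)"
    using kj by (simp add: field_simps)
  ultimately show ?thesis using kj by (simp add: divide_less_eq)
qed

lemma alg_below_right:
  fixes i x j yi yj a s :: real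
  assumes "i < x" "x < j" "yj < a + s * j" "yi = a + s * i"
  shows "yi + (yj - yi) * (x - i) / (j - i) < a + s * x"
proof -
  have ji: "j - i > 0" using assms by simp
  have "yi * (j - x) + yj * (x - i) < yi * (j - x) + (a + s * j) * (x - i)"
    using assms by (intro add_strict_left_mono mult_strict_right_mono) auto
  also have "\<dots> = (a + s * x) * (j - i)" using assms by (simp add: algebra_simps)
  finally have "yi * (j - x) + yj * (x - i) < (a + s * x) * (j - i)" .
  moreover have "yi + (yj - yi) * (x - i) / (j - i) = (yi * (j - x) + yj * (x - i)) / (j - i)"
    using ji by (simp add: field_simps)
  ultimately show ?thesis using ji by (simp add: divide_less_eq)
qed

lemma alg_touch:
  fixes i k x yi yk :: real
  assumes "i < k"
  defines "s \<equiv> (yk - yi) / (k - i)"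
  shows "yi - s * i + s * k = yk" and "yi + (yk - yi) * (x - i) / (k - i) = yi - s * i + s * x"
proof -
  have e: "s * (k - i) = yk - yi" unfolding s_def using assms by simp
  show "yi - s * i + s * k = yk" using e by (simp add: algebra_simps)
  have "(yk - yi) * (x - i) / (k - i) = s * (x - i)" unfolding s_def by simp
  thus "yi + (yk - yi) * (x - i) / (k - i) = yi - s * i + s * x" by (simp add: algebra_simps)
qed

lemma alg_pair:
  fixes a b c ya yb yc :: real
  assumes "a < b" "b < c"
  shows "yb < ya + (yc - ya) * (b - a) / (c - a) \<longleftrightarrow> (yb - ya) / (b - a) < (yc - yb) / (c - b)"
    and "yb \<le> ya + (yc - ya) * (b - a) / (c - a) \<longleftrightarrow> (yb - ya) / (b - a) \<le> (yc - yb) / (c - b)"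
proof -
  have p1: "b - a > 0" "c - b > 0" "c - a > 0" using assms by auto
  have e1: "yb < ya + (yc - ya) * (b - a) / (c - a) \<longleftrightarrow> yb * (c - a) < ya * (c - a) + (yc - ya) * (b - a)"
    using p1 by (simp add: field_simps)
  have e2: "(yb - ya) / (b - a) < (yc - yb) / (c - b) \<longleftrightarrow> (yb - ya) * (c - b) < (yc - yb) * (b - a)"
    using p1 by (simp add: field_simps)
  have e3: "yb * (c - a) < ya * (c - a) + (yc - ya) * (b - a) \<longleftrightarrow> (yb - ya) * (c - b) < (yc - yb) * (b - a)"
    by (simp add: algebra_simps)
  show "yb < ya + (yc - ya) * (b - a) / (c - a) \<longleftrightarrow> (yb - ya) / (b - a) < (yc - yb) / (c - b)"
    using e1 e2 e3 by simp
  have f1: "yb \<le> ya + (yc - ya) * (b - a) / (c - a) \<longleftrightarrow> yb * (c - a) \<le> ya * (c - a) + (yc - ya) * (b - a)"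
    using p1 by (simp add: field_simps)
  have f2: "(yb - ya) / (b - a) \<le> (yc - yb) / (c - b) \<longleftrightarrow> (yb - ya) * (c - b) \<le> (yc - yb) * (b - a)"
    using p1 by (simp add: field_simps)
  have f3: "yb * (c - a) \<le> ya * (c - a) + (yc - ya) * (b - a) \<longleftrightarrow> (yb - ya) * (c - b) \<le> (yc - yb) * (b - a)"
    by (simp add: algebra_simps)
  show "yb \<le> ya + (yc - ya) * (b - a) / (c - a) \<longleftrightarrow> (yb - ya) / (b - a) \<le> (yc - yb) / (c - b)"
    using f1 f2 f3 by simp
qed

lemma alg_left_line:
  fixes k d y yk s :: real
  assumes "k < d" "(y - yk) / (d - k) \<le> s"
  shows "y + s * (k - d) \<le> yk"
proof -
  have "y - yk \<le> s * (d - k)" using assms by (simp add: divide_le_eq)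
  thus ?thesis by (simp add: algebra_simps)
qed

lemma alg_right_line:
  fixes k d y yk s :: real
  assumes "d < k" "s \<le> (yk - y) / (k - d)"
  shows "y + s * (k - d) \<le> yk"
proof -
  have "s * (k - d) \<le> yk - y" using assms by (simp add: le_divide_eq)
  thus ?thesis by (simp add: algebra_simps)
qed


lemma alg_lowline:
  fixes K D rL yk y :: real
  assumes "K < D" "rL \<le> yk + (y - yk) * (D - 1 - K) / (D - K)"
  shows "y + (y - rL) * (K - D) \<le> yk"
proof -
  have u: "D - K > 0" using assms by simp
  have "rL * (D - K) \<le> yk * (D - K) + (y - yk) * (D - 1 - K)"
    using assms(2) u by (simp add: field_simps)
  thus ?thesis by (simp add: algebra_simps)
qed

lemma alg_highline:
  fixes K D rR yk y :: real
  assumes "D < K" "rR \<le> y + (yk - y) * (D + 1 - D) / (K - D)"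
  shows "y + (rR - y) * (K - D) \<le> yk"
proof -
  have u: "K - D > 0" using assms by simp
  have "rR * (K - D) \<le> y * (K - D) + (yk - y)"
    using assms(2) u by (simp add: field_simps)
  thus ?thesis by (simp add: algebra_simps)
qed

lemma alg_slope:
  fixes t1 t2 f a y rL :: real
  assumes "t1 + t2 = 1" "f \<le> (1 - t1) * a + t1 * y" "rL \<le> (1 - t2) * a + t2 * y"
  shows "f \<le> a + (y - rL)"
proof -
  have t2: "t2 = 1 - t1" using assms(1) by simp
  have "rL \<le> t1 * a + (1 - t1) * y" using assms(3) unfolding t2 by simp
  with assms(2) show ?thesis by (simp add: algebra_simps)
qed


context dvf begin

definition adm :: "'a poly \<Rightarrow> (real \<Rightarrow> ereal) \<Rightarrow> bool" where
  "adm Q g \<longleftrightarrow> convex_on_ereal {0..real (degree Q)} g \<and> (\<forall>z\<in>{0..real (degree Q)}. g z \<noteq> -\<infinity>)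
     \<and> (\<forall>i\<le>degree Q. g (real i) \<le> val (coeff Q i))"

lemma NF_eq: "0 \<le> x \<Longrightarrow> x \<le> real (degree Q) \<Longrightarrow> NF val Q x = Sup {g x | g. adm Q g}"
  by (simp add: NF_def adm_def)

lemma NF_out: "x < 0 \<or> real (degree Q) < x \<Longrightarrow> NF val Q x = \<infinity>"
  by (auto simp: NF_def)

lemma NF_upper: "0 \<le> x \<Longrightarrow> x \<le> real (degree Q) \<Longrightarrow> adm Q g \<Longrightarrow> g x \<le> NF val Q x"
  by (subst NF_eq) (auto intro!: Sup_upper)

lemma NF_least: "0 \<le> x \<Longrightarrow> x \<le> real (degree Q) \<Longrightarrow> (\<And>g. adm Q g \<Longrightarrow> g x \<le> B) \<Longrightarrow> NF val Q x \<le> B"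
  by (subst NF_eq) (auto intro!: Sup_least)

lemma NF_line:
  assumes "\<forall>j\<le>degree Q. ereal (a + s * real j) \<le> val (coeff Q j)" "0 \<le> x" "x \<le> real (degree Q)"
  shows "ereal (a + s * x) \<le> NF val Q x"
proof -
  have "adm Q (\<lambda>z. ereal (a + s * z))"
    unfolding adm_def convex_on_ereal_def
  proof (intro conjI ballI allI impI)
    fix u v t :: real
    have "a + s * ((1 - t) * u + t * v) = (1 - t) * (a + s * u) + t * (a + s * v)"
      by (simp add: algebra_simps)
    thus "ereal (a + s * ((1 - t) * u + t * v)) \<le> ereal (1 - t) * ereal (a + s * u) + ereal t * ereal (a + s * v)"
      by simp
  qed (use assms in auto)
  then show ?thesis using NF_upper assms by blast
qed

lemma conv_comb_in: "0 \<le> t \<Longrightarrow> t \<le> 1 \<Longrightarrow> 0 \<le> u \<Longrightarrow> u \<le> N \<Longrightarrow> 0 \<le> v \<Longrightarrow> v \<le> N \<Longrightarrow>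
   0 \<le> (1 - t) * u + t * v \<and> (1 - t) * u + t * v \<le> (N::real)"
proof -
  assume a: "0 \<le> t" "t \<le> 1" "0 \<le> u" "u \<le> N" "0 \<le> v" "v \<le> N"
  have "(1 - t) * u \<le> (1 - t) * N" using a by (intro mult_left_mono) auto
  moreover have "t * v \<le> t * N" using a by (intro mult_left_mono) auto
  ultimately have "(1 - t) * u + t * v \<le> N" by (simp add: algebra_simps)
  moreover have "0 \<le> (1 - t) * u + t * v" using a by simp
  ultimately show ?thesis by simp
qed

lemma NF_conv:
  assumes "0 \<le> x" "x \<le> real (degree Q)" "0 \<le> y" "y \<le> real (degree Q)" "0 \<le> t" "t \<le> 1"
  shows "NF val Q ((1 - t) * x + t * y) \<le> ereal (1 - t) * NF val Q x + ereal t * NF val Q y"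
proof -
  have r: "0 \<le> (1 - t) * x + t * y \<and> (1 - t) * x + t * y \<le> real (degree Q)"
    using conv_comb_in assms by blast
  show ?thesis
  proof (rule NF_least)
    show "0 \<le> (1 - t) * x + t * y" "(1 - t) * x + t * y \<le> real (degree Q)" using r by auto
    fix g assume g: "adm Q g"
    have "g ((1 - t) * x + t * y) \<le> ereal (1 - t) * g x + ereal t * g y"
      using g assms unfolding adm_def convex_on_ereal_def by auto
    also have "\<dots> \<le> ereal (1 - t) * NF val Q x + ereal t * NF val Q y"
      using assms NF_upper[OF _ _ g] by (intro add_mono ereal_mult_left_mono) auto
    finally show "g ((1 - t) * x + t * y) \<le> ereal (1 - t) * NF val Q x + ereal t * NF val Q y" .
  qed
qed

lemma NF_interp:
  assumes "i \<le> degree Q" "k \<le> degree Q" "0 \<le> t" "t \<le> 1"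
  shows "NF val Q ((1 - t) * real i + t * real k) \<le> ereal (1 - t) * val (coeff Q i) + ereal t * val (coeff Q k)"
proof -
  have r: "0 \<le> (1 - t) * real i + t * real k \<and> (1 - t) * real i + t * real k \<le> real (degree Q)"
    using conv_comb_in[of t "real i" "real (degree Q)" "real k"] assms by simp
  show ?thesis
  proof (rule NF_least)
    show "0 \<le> (1 - t) * real i + t * real k" "(1 - t) * real i + t * real k \<le> real (degree Q)" using r by auto
    fix g assume g: "adm Q g"
    have "g ((1 - t) * real i + t * real k) \<le> ereal (1 - t) * g (real i) + ereal t * g (real k)"
      using g assms unfolding adm_def convex_on_ereal_def by auto
    also have "\<dots> \<le> ereal (1 - t) * val (coeff Q i) + ereal t * val (coeff Q k)"
      using assms g unfolding adm_def by (intro add_mono ereal_mult_left_mono) auto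
    finally show "g ((1 - t) * real i + t * real k) \<le> ereal (1 - t) * val (coeff Q i) + ereal t * val (coeff Q k)" .
  qed
qed

lemma NF_coeff: "i \<le> degree Q \<Longrightarrow> NF val Q (real i) \<le> val (coeff Q i)"
  using NF_interp[of i Q i 0] by (simp add: zero_ereal_def[symmetric])

lemma NF_interp_real:
  assumes "i \<le> degree Q" "k \<le> degree Q" "real i \<le> x" "x \<le> real k" "i < k"
    and "val (coeff Q i) = ereal yi" "val (coeff Q k) = ereal yk"
  shows "NF val Q x \<le> ereal (yi + (yk - yi) * (x - real i) / (real k - real i))"
proof -
  define t where "t = (x - real i) / (real k - real i)"
  have t: "0 \<le> t" "t \<le> 1" using assms unfolding t_def by (auto simp: divide_le_eq)
  have tk: "t * (real k - real i) = x - real i" using assms unfolding t_def by simp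
  have x: "x = (1 - t) * real i + t * real k"
    using tk by (simp add: algebra_simps)
  have "NF val Q x \<le> ereal (1 - t) * ereal yi + ereal t * ereal yk"
    using NF_interp[OF assms(1,2) t] x assms by simp
  also have "\<dots> = ereal (yi + (yk - yi) * (x - real i) / (real k - real i))"
    unfolding t_def by (simp add: algebra_simps add_divide_distrib diff_divide_distrib)
  finally show ?thesis .
qed

end


lemma ereal_all_le_inf: "(\<And>M::real. ereal M \<le> z) \<Longrightarrow> z = \<infinity>"
proof (cases z)
  case (real r)
  assume h: "\<And>M::real. ereal M \<le> z"
  from h[of "r + 1"] real show ?thesis by simp
qed auto

lemma ereal_minus_bound: "ereal b \<le> A \<Longrightarrow> ereal (b - c) \<le> A - ereal c"
  by (cases A) auto

locale epsetup = dvf val for val :: "'a::field \<Rightarrow> ereal" +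
  fixes P :: "'a poly" and d :: nat and y :: real
  assumes P0: "P \<noteq> 0" and dle: "d \<le> degree P" and vy: "val (coeff P d) = ereal y"
    and ext: "(real d, y) extreme_point_of NP val P"
begin

abbreviation "n \<equiv> degree P"
definition "yv j = real_of_ereal (val (coeff P j))"

lemma val_fin: "coeff P j \<noteq> 0 \<Longrightarrow> val (coeff P j) = ereal (yv j)"
  using val_finite[of "coeff P j"] unfolding yv_def by auto

lemma yv_d: "yv d = y" using vy unfolding yv_def by simp
lemma cd0: "coeff P d \<noteq> 0" using vy by auto

lemma EX_pair:
  assumes k1: "k1 < d" and k2: "d < k2" "k2 \<le> n" and c1: "coeff P k1 \<noteq> 0" and c2: "coeff P k2 \<noteq> 0"
  shows "y < yv k1 + (yv k2 - yv k1) * (real d - real k1) / (real k2 - real k1)"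
proof (rule ccontr)
  assume nt: "\<not> ?thesis"
  define I where "I = yv k1 + (yv k2 - yv k1) * (real d - real k1) / (real k2 - real k1)"
  define e where "e = y - I"
  have e0: "0 \<le> e" using nt unfolding e_def I_def by simp
  define t where "t = (real d - real k1) / (real k2 - real k1)"
  have t: "0 < t" "t < 1" using k1 k2 unfolding t_def by (auto simp: divide_less_eq)
  define a where "a = (real k1, yv k1 + e)"
  define b where "b = (real k2, yv k2 + e)"
  have inNP: "\<And>k w. k \<le> n \<Longrightarrow> val (coeff P k) \<le> ereal w \<Longrightarrow> (real k, w) \<in> NP val P"
    unfolding NP_def by (rule hull_inc) auto
  have aN: "a \<in> NP val P" unfolding a_def using k1 k2 e0 val_fin[OF c1] by (intro inNP) auto
  have bN: "b \<in> NP val P" unfolding b_def using k2 e0 val_fin[OF c2] by (intro inNP) auto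
  have ab: "a \<noteq> b" using k1 k2 unfolding a_def b_def by auto
  have tk: "t * (real k2 - real k1) = real d - real k1" using k1 k2 unfolding t_def by simp
  have fstc: "(1 - t) * real k1 + t * real k2 = real d" using tk by (simp add: algebra_simps)
  have I_eq: "I = yv k1 + (yv k2 - yv k1) * t" unfolding I_def t_def by simp
  have sndc: "(1 - t) * (yv k1 + e) + t * (yv k2 + e) = y"
    using I_eq unfolding e_def by (simp add: algebra_simps)
  have "(real d, y) = (1 - t) *\<^sub>R a + t *\<^sub>R b"
    unfolding a_def b_def using fstc sndc by simp
  hence "(real d, y) \<in> open_segment a b" using ab t by (auto simp: in_segment)
  thus False using ext aN bN unfolding extreme_point_of_def by blast
qed

lemma EX_lines: "\<exists>s1 s2. s1 < s2 \<and> (\<forall>k\<le>n. ereal (y + s1 * (real k - real d)) \<le> val (coeff P k))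
     \<and> (\<forall>k\<le>n. ereal (y + s2 * (real k - real d)) \<le> val (coeff P k))"
proof -
  define L where "L = (\<lambda>k. (y - yv k) / (real d - real k)) ` {k. k < d \<and> coeff P k \<noteq> 0}"
  define R where "R = (\<lambda>k. (yv k - y) / (real k - real d)) ` {k. d < k \<and> k \<le> n \<and> coeff P k \<noteq> 0}"
  have fL: "finite L" unfolding L_def by simp
  have fR: "finite R" unfolding R_def by simp
  have LR: "\<forall>l\<in>L. \<forall>r\<in>R. l < r"
  proof (intro ballI)
    fix l r assume "l \<in> L" "r \<in> R"
    then obtain k1 k2 where k: "k1 < d" "coeff P k1 \<noteq> 0" "d < k2" "k2 \<le> n" "coeff P k2 \<noteq> 0"
      and l: "l = (y - yv k1) / (real d - real k1)" and r: "r = (yv k2 - y) / (real k2 - real d)"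
      unfolding L_def R_def by auto
    have "y < yv k1 + (yv k2 - yv k1) * (real d - real k1) / (real k2 - real k1)"
      using EX_pair k by blast
    then show "l < r" unfolding l r using alg_pair(1)[of "real k1" "real d" "real k2" y "yv k1" "yv k2"] k
      by simp
  qed
  define good where "good s \<longleftrightarrow> (\<forall>l\<in>L. l \<le> s) \<and> (\<forall>r\<in>R. s \<le> r)" for s
  have line: "\<forall>k\<le>n. ereal (y + s * (real k - real d)) \<le> val (coeff P k)" if g: "good s" for s
  proof (intro allI impI)
    fix k assume kn: "k \<le> n"
    show "ereal (y + s * (real k - real d)) \<le> val (coeff P k)"
    proof (cases "coeff P k = 0")
      case True then show ?thesis by simp
    next
      case False
      have vk: "val (coeff P k) = ereal (yv k)" using val_fin[OF False] .
      consider "k < d" | "k = d" | "d < k" by linarith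
      then show ?thesis
      proof cases
        case 1
        have "(y - yv k) / (real d - real k) \<le> s" using g False 1 unfolding good_def L_def by auto
        then show ?thesis using alg_left_line[of "real k" "real d" y "yv k" s] 1 vk by simp
      next
        case 2 then show ?thesis using vy by simp
      next
        case 3
        have "s \<le> (yv k - y) / (real k - real d)" using g False 3 kn unfolding good_def R_def by auto
        then show ?thesis using alg_right_line[of "real d" "real k" s "yv k" y] 3 vk by simp
      qed
    qed
  qed
  have "\<exists>s1 s2. s1 < s2 \<and> good s1 \<and> good s2"
  proof (cases "L = {}")
    case LE: True
    show ?thesis
    proof (cases "R = {}")
      case True then show ?thesis using LE unfolding good_def by (intro exI[of _ 0] exI[of _ 1]) auto
    next
      case False
      have "\<forall>r\<in>R. Min R \<le> r" using fR by simp
      then show ?thesis using LE unfolding good_def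
        by (intro exI[of _ "Min R - 1"] exI[of _ "Min R"]) force
    qed
  next
    case False
    show ?thesis
    proof (cases "R = {}")
      case True
      have "\<forall>l\<in>L. l \<le> Max L" using fL by simp
      then show ?thesis using True unfolding good_def
        by (intro exI[of _ "Max L"] exI[of _ "Max L + 1"]) force
    next
      case RF: False
      have "Max L < Min R" using LR False RF fL fR by (meson Max_in Min_in)
      moreover have "\<forall>l\<in>L. l \<le> Max L" using fL by simp
      moreover have "\<forall>r\<in>R. Min R \<le> r" using fR by simp
      ultimately show ?thesis unfolding good_def
        by (intro exI[of _ "Max L"] exI[of _ "Min R"]) force
    qed
  qed
  then show ?thesis using line by blast
qed

lemma NF_d: "NF val P (real d) = ereal y"
proof (rule antisym)
  show "NF val P (real d) \<le> ereal y" using NF_coeff[OF dle] vy by simp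
  obtain s1 where l: "\<forall>k\<le>n. ereal (y + s1 * (real k - real d)) \<le> val (coeff P k)" using EX_lines by blast
  have "ereal (y - s1 * real d + s1 * real d) \<le> NF val P (real d)"
    using l dle by (intro NF_line) (auto simp: algebra_simps)
  thus "ereal y \<le> NF val P (real d)" by simp
qed

lemma kappa_pos: "NF val P (real d + 1) + NF val P (real d - 1) - 2 * NF val P (real d) > 0"
proof -
  obtain s1 s2 where s: "s1 < s2" and l1: "\<forall>k\<le>n. ereal (y + s1 * (real k - real d)) \<le> val (coeff P k)"
    and l2: "\<forall>k\<le>n. ereal (y + s2 * (real k - real d)) \<le> val (coeff P k)" using EX_lines by blast
  have l1': "\<forall>k\<le>n. ereal (y - s1 * real d + s1 * real k) \<le> val (coeff P k)" using l1 by (simp add: algebra_simps)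
  have l2': "\<forall>k\<le>n. ereal (y - s2 * real d + s2 * real k) \<le> val (coeff P k)" using l2 by (simp add: algebra_simps)
  have A: "ereal (y + s2) \<le> NF val P (real d + 1)"
  proof (cases "d + 1 \<le> n")
    case True
    have "ereal (y - s2 * real d + s2 * (real d + 1)) \<le> NF val P (real d + 1)"
      using True by (intro NF_line[OF l2']) auto
    thus ?thesis by (simp add: algebra_simps)
  next
    case False then show ?thesis by (simp add: NF_out)
  qed
  have B: "ereal (y - s1) \<le> NF val P (real d - 1)"
  proof (cases "1 \<le> d")
    case True
    have "ereal (y - s1 * real d + s1 * (real d - 1)) \<le> NF val P (real d - 1)"
      using True dle by (intro NF_line[OF l1']) auto
    thus ?thesis by (simp add: algebra_simps)
  next
    case False then show ?thesis by (simp add: NF_out)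
  qed
  have "ereal (y + s2 + (y - s1)) \<le> NF val P (real d + 1) + NF val P (real d - 1)"
    using add_mono[OF A B] by simp
  hence "ereal (y + s2 + (y - s1) - 2 * y) \<le> NF val P (real d + 1) + NF val P (real d - 1) - ereal (2 * y)"
    by (rule ereal_minus_bound)
  moreover have "2 * NF val P (real d) = ereal (2 * y)" using NF_d by simp
  moreover have "0 < ereal (y + s2 + (y - s1) - 2 * y)" using s by simp
  ultimately show ?thesis by (metis less_le_trans)
qed

end


context epsetup begin

definition "touch x \<longleftrightarrow> (\<exists>i k t a s. i \<le> k \<and> k \<le> n \<and> 0 \<le> t \<and> t \<le> 1 \<and> x = (1 - t) * real i + t * real k
   \<and> (\<forall>j\<le>n. ereal (a + s * real j) \<le> val (coeff P j))
   \<and> val (coeff P i) = ereal (a + s * real i) \<and> val (coeff P k) = ereal (a + s * real k))"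

lemma SL:
  assumes x0: "0 \<le> x" and xn: "x \<le> real n"
  shows "NF val P x = \<infinity> \<or> touch x"
proof -
  define C where "C = {j. j \<le> n \<and> coeff P j \<noteq> 0}"
  have fC: "finite C" unfolding C_def by simp
  have nC: "n \<in> C" unfolding C_def using P0 by simp
  show ?thesis
  proof (cases "\<exists>j\<in>C. real j \<le> x")
    case False
    have "NF val P x = \<infinity>"
    proof (rule ereal_all_le_inf)
      fix M :: real
      define m0 where "m0 = Min C"
      define c0 where "c0 = Min (yv ` C)"
      have m0C: "m0 \<in> C" unfolding m0_def using fC nC by (intro Min_in) auto
      have m0x: "x < real m0" using False m0C by auto
      define K where "K = max 0 ((M - c0) / (real m0 - x))"
      have K0: "0 \<le> K" unfolding K_def by simp
      have KM: "M - c0 \<le> K * (real m0 - x)"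
      proof -
        have "(M - c0) / (real m0 - x) \<le> K" unfolding K_def by simp
        thus ?thesis using m0x by (simp add: divide_le_eq)
      qed
      have lin: "\<forall>j\<le>n. ereal (c0 + K * real m0 + (- K) * real j) \<le> val (coeff P j)"
      proof (intro allI impI)
        fix j assume jn: "j \<le> n"
        show "ereal (c0 + K * real m0 + (- K) * real j) \<le> val (coeff P j)"
        proof (cases "coeff P j = 0")
          case True then show ?thesis by simp
        next
          case False
          hence jC: "j \<in> C" unfolding C_def using jn by simp
          have "m0 \<le> j" unfolding m0_def using fC jC by simp
          hence "K * real m0 \<le> K * real j" using K0 by (intro mult_left_mono) auto
          moreover have "c0 \<le> yv j" unfolding c0_def using fC jC by simp
          ultimately have "c0 + K * real m0 + (- K) * real j \<le> yv j" by simp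
          thus ?thesis using val_fin[OF False] by simp
        qed
      qed
      have "ereal (c0 + K * real m0 + (- K) * x) \<le> NF val P x" using NF_line[OF lin x0 xn] .
      moreover have "M \<le> c0 + K * real m0 + (- K) * x" using KM by (simp add: algebra_simps)
      ultimately show "ereal M \<le> NF val P x" by (metis ereal_less_eq(3) order_trans)
    qed
    then show ?thesis by simp
  next
    case True
    then obtain i0 where i0: "i0 \<in> C" "real i0 \<le> x" by blast
    define Pi where "Pi = {(i, k). i \<in> C \<and> k \<in> C \<and> real i \<le> x \<and> x \<le> real k}"
    have "Pi \<subseteq> C \<times> C" unfolding Pi_def by auto
    hence fPi: "finite Pi" using fC by (meson finite_SigmaI finite_subset)
    have Pi_ne: "(i0, n) \<in> Pi" unfolding Pi_def using i0 nC xn by simp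
    define f where "f = (\<lambda>(i::nat, k::nat). if i = k then yv i
        else yv i + (yv k - yv i) * (x - real i) / (real k - real i))"
    define F where "F = Min (f ` Pi)"
    have Fle: "\<And>q. q \<in> Pi \<Longrightarrow> F \<le> f q" unfolding F_def using fPi by simp
    have "F \<in> f ` Pi" unfolding F_def using fPi Pi_ne by (intro Min_in) auto
    then obtain i k where ikP: "(i, k) \<in> Pi" and Fik: "F = f (i, k)" by auto
    have iC: "i \<in> C" and kC: "k \<in> C" and ix: "real i \<le> x" and xk: "x \<le> real k"
      using ikP unfolding Pi_def by auto
    have inC: "\<And>j. j \<in> C \<Longrightarrow> j \<le> n \<and> coeff P j \<noteq> 0" unfolding C_def by simp
    show ?thesis
    proof (cases "real i < x \<and> x < real k")
      case True
      hence ik: "i < k" by simp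
      define s where "s = (yv k - yv i) / (real k - real i)"
      define a where "a = yv i - s * real i"
      have tk: "a + s * real k = yv k" unfolding a_def s_def using alg_touch(1)[of "real i" "real k"] ik by simp
      have Fx: "F = a + s * x" unfolding Fik f_def a_def s_def using alg_touch(2)[of "real i" "real k"] ik by simp
      have below: "\<forall>j\<le>n. ereal (a + s * real j) \<le> val (coeff P j)"
      proof (intro allI impI)
        fix j assume jn: "j \<le> n"
        show "ereal (a + s * real j) \<le> val (coeff P j)"
        proof (cases "coeff P j = 0")
          case True then show ?thesis by simp
        next
          case cj: False
          have jC: "j \<in> C" unfolding C_def using jn cj by simp
          have "a + s * real j \<le> yv j"
          proof (rule ccontr)
            assume "\<not> a + s * real j \<le> yv j"
            hence lt: "yv j < a + s * real j" by simp
            consider "real j < x" | "real j = x" | "x < real j" by linarith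
            then show False
            proof cases
              case 1
              have "(j, k) \<in> Pi" unfolding Pi_def using jC kC 1 xk by simp
              hence "F \<le> f (j, k)" by (rule Fle)
              moreover have "j \<noteq> k" using 1 True by auto
              moreover have "yv j + (yv k - yv j) * (x - real j) / (real k - real j) < a + s * x"
                using alg_below_left[of "real j" x "real k" "yv j" a s "yv k"] 1 True lt tk by simp
              ultimately show False unfolding f_def Fx by simp
            next
              case 2
              have "(j, j) \<in> Pi" unfolding Pi_def using jC 2 by simp
              hence "F \<le> f (j, j)" by (rule Fle)
              thus False unfolding f_def Fx using lt 2 by simp
            next
              case 3
              have "(i, j) \<in> Pi" unfolding Pi_def using jC iC 3 ix by simp
              hence "F \<le> f (i, j)" by (rule Fle)
              moreover have "i \<noteq> j" using 3 True by auto
              moreover have "yv i + (yv j - yv i) * (x - real i) / (real j - real i) < a + s * x"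
                using alg_below_right[of "real i" x "real j" "yv j" a s "yv i"] 3 True lt
                unfolding a_def by simp
              ultimately show False unfolding f_def Fx by simp
            qed
          qed
          then show ?thesis using val_fin[OF cj] by simp
        qed
      qed
      define t where "t = (x - real i) / (real k - real i)"
      have t01: "0 \<le> t" "t \<le> 1" unfolding t_def using ix xk ik by (auto simp: divide_le_eq)
      have tt: "t * (real k - real i) = x - real i" unfolding t_def using ik by simp
      have xt: "x = (1 - t) * real i + t * real k" using tt by (simp add: algebra_simps)
      have vi: "val (coeff P i) = ereal (a + s * real i)" using val_fin inC[OF iC] unfolding a_def by simp
      have vk: "val (coeff P k) = ereal (a + s * real k)" using val_fin inC[OF kC] tk by simp
      show ?thesis unfolding touch_def
        using ik inC[OF kC] t01 xt below vi vk by (intro disjI2 exI[of _ i] exI[of _ k] exI[of _ t] exI[of _ a] exI[of _ s]) auto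
    next
      case False
      define j0 where "j0 = (if real i = x then i else k)"
      have j0x: "real j0 = x" unfolding j0_def using False ix xk by auto
      have j0C: "j0 \<in> C" unfolding j0_def using iC kC by simp
      have Fj0: "F = yv j0"
      proof (cases "real i = x")
        case True then show ?thesis unfolding Fik f_def j0_def by simp
      next
        case False
        hence "x = real k" "i \<noteq> k" using \<open>\<not> (real i < x \<and> x < real k)\<close> ix xk by auto
        then show ?thesis unfolding Fik f_def j0_def using False by simp
      qed
      define Ls where "Ls = (\<lambda>j. (yv j0 - yv j) / (real j0 - real j)) ` {j \<in> C. j < j0}"
      define Rs where "Rs = (\<lambda>j. (yv j - yv j0) / (real j - real j0)) ` {j \<in> C. j0 < j}"
      have fLs: "finite Ls" unfolding Ls_def using fC by simp
      have fRs: "finite Rs" unfolding Rs_def using fC by simp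
      have LR: "\<forall>l\<in>Ls. \<forall>r\<in>Rs. l \<le> r"
      proof (intro ballI)
        fix l r assume "l \<in> Ls" "r \<in> Rs"
        then obtain j j' where jj: "j \<in> C" "j < j0" "j' \<in> C" "j0 < j'"
          and l: "l = (yv j0 - yv j) / (real j0 - real j)" and r: "r = (yv j' - yv j0) / (real j' - real j0)"
          unfolding Ls_def Rs_def by auto
        have "(j, j') \<in> Pi" unfolding Pi_def using jj j0x by simp
        hence "F \<le> f (j, j')" by (rule Fle)
        hence "yv j0 \<le> yv j + (yv j' - yv j) * (real j0 - real j) / (real j' - real j)"
          unfolding f_def using jj j0x Fj0 by simp
        then show "l \<le> r" unfolding l r using alg_pair(2)[of "real j" "real j0" "real j'" "yv j0" "yv j" "yv j'"] jj
          by simp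
      qed
      define s where "s = (if Ls = {} then (if Rs = {} then 0 else Min Rs) else Max Ls)"
      have sL: "\<forall>l\<in>Ls. l \<le> s" unfolding s_def using fLs by auto
      have sR: "\<forall>r\<in>Rs. s \<le> r"
      proof
        fix r assume r: "r \<in> Rs"
        show "s \<le> r"
        proof (cases "Ls = {}")
          case True then show ?thesis unfolding s_def using r fRs by auto
        next
          case False
          have "Max Ls \<in> Ls" using False fLs by simp
          then show ?thesis unfolding s_def using False LR r by auto
        qed
      qed
      define a where "a = yv j0 - s * real j0"
      have below: "\<forall>j\<le>n. ereal (a + s * real j) \<le> val (coeff P j)"
      proof (intro allI impI)
        fix j assume jn: "j \<le> n"
        show "ereal (a + s * real j) \<le> val (coeff P j)"
        proof (cases "coeff P j = 0")
          case True then show ?thesis by simp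
        next
          case cj: False
          have jC: "j \<in> C" unfolding C_def using jn cj by simp
          have "yv j0 + s * (real j - real j0) \<le> yv j"
          proof -
            consider "j < j0" | "j = j0" | "j0 < j" by linarith
            then show ?thesis
            proof cases
              case 1
              have "(yv j0 - yv j) / (real j0 - real j) \<le> s" using sL jC 1 unfolding Ls_def by auto
              then show ?thesis using alg_left_line[of "real j" "real j0" "yv j0" "yv j" s] 1 by simp
            next
              case 2 then show ?thesis by simp
            next
              case 3
              have "s \<le> (yv j - yv j0) / (real j - real j0)" using sR jC 3 unfolding Rs_def by auto
              then show ?thesis using alg_right_line[of "real j0" "real j" s "yv j" "yv j0"] 3 by simp
            qed
          qed
          then show ?thesis using val_fin[OF cj] unfolding a_def by (simp add: algebra_simps)
        qed
      qed
      have vj0: "val (coeff P j0) = ereal (a + s * real j0)" using val_fin inC[OF j0C] unfolding a_def by simp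
      show ?thesis unfolding touch_def
        using inC[OF j0C] j0x below vj0
        by (intro disjI2 exI[of _ j0] exI[of _ j0] exI[of _ 0] exI[of _ a] exI[of _ s]) auto
    qed
  qed
qed

end


context epsetup begin

definition "touch_d x \<longleftrightarrow> (\<exists>i k t a s. i \<le> k \<and> k \<le> d \<and> 0 \<le> t \<and> t \<le> 1 \<and> x = (1 - t) * real i + t * real k
   \<and> (\<forall>j\<le>n. ereal (a + s * real j) \<le> val (coeff P j))
   \<and> val (coeff P i) = ereal (a + s * real i) \<and> val (coeff P k) = ereal (a + s * real k))"

lemma SL_d:
  assumes x0: "0 \<le> x" and xd: "x \<le> real d"
  shows "NF val P x = \<infinity> \<or> touch_d x"
proof -
  have xn: "x \<le> real n" using xd dle by linarith
  from SL[OF x0 xn] show ?thesis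
  proof
    assume "touch x"
    then obtain i k t a s where ik: "i \<le> k" "k \<le> n" and t: "0 \<le> t" "t \<le> 1"
      and x: "x = (1 - t) * real i + t * real k"
      and below: "\<forall>j\<le>n. ereal (a + s * real j) \<le> val (coeff P j)"
      and vi: "val (coeff P i) = ereal (a + s * real i)" and vk: "val (coeff P k) = ereal (a + s * real k)"
      unfolding touch_def by blast
    have ix: "real i \<le> x"
    proof -
      have "t * real i \<le> t * real k" using ik t by (intro mult_left_mono) auto
      thus ?thesis unfolding x by (simp add: algebra_simps)
    qed
    show ?thesis
    proof (cases "k \<le> d")
      case True
      then show ?thesis unfolding touch_d_def using ik t x below vi vk
        by (intro disjI2 exI[of _ i] exI[of _ k] exI[of _ t] exI[of _ a] exI[of _ s]) auto
    next
      case False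
      have ad: "a + s * real d \<le> y" using below dle vy by (metis ereal_less_eq(3))
      show ?thesis
      proof (cases "i < d")
        case True
        have ci: "coeff P i \<noteq> 0" using vi by auto
        have ck: "coeff P k \<noteq> 0" using vk by auto
        have yi: "yv i = a + s * real i" using val_fin[OF ci] vi by simp
        have yk: "yv k = a + s * real k" using val_fin[OF ck] vk by simp
        have "y < yv i + (yv k - yv i) * (real d - real i) / (real k - real i)"
          using EX_pair[OF True _ ik(2) ci ck] False by simp
        moreover have "yv i + (yv k - yv i) * (real d - real i) / (real k - real i) = a + s * real d"
        proof -
          have "(yv k - yv i) = s * (real k - real i)" using yi yk by (simp add: algebra_simps)
          hence "(yv k - yv i) * (real d - real i) / (real k - real i) = s * (real d - real i)"
            using True False by simp
          thus ?thesis using yi by (simp add: algebra_simps)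
        qed
        ultimately show ?thesis using ad by simp
      next
        case False
        hence id: "i = d" using ix xd by linarith
        hence xd': "x = real d" using ix xd by simp
        show ?thesis unfolding touch_d_def using id xd' below vi
          by (intro disjI2 exI[of _ d] exI[of _ d] exI[of _ 0] exI[of _ a] exI[of _ s]) auto
      qed
    qed
  qed simp
qed

lemma NF_part2:
  assumes dA: "degree A = d" and lA: "coeff A d = coeff P d"
    and cA: "\<forall>j<d. coeff A j = coeff P j \<or> NF val P (real j) < val (coeff A j - coeff P j)"
  shows "\<forall>x\<in>{0..real d}. NF val A x = NF val P x"
proof
  fix x assume "x \<in> {0..real d}"
  hence x0: "0 \<le> x" and xd: "x \<le> real d" by auto
  have xn: "x \<le> real n" using xd dle by linarith
  have vA: "val (coeff A i) = val (coeff P i)" if "i \<le> d" "val (coeff P i) \<le> NF val P (real i)" for i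
  proof (cases "i = d")
    case True then show ?thesis using lA by simp
  next
    case False
    hence "i < d" using that by simp
    then consider "coeff A i = coeff P i" | "NF val P (real i) < val (coeff A i - coeff P i)" using cA by blast
    then show ?thesis
    proof cases
      case 2
      hence "val (coeff P i) < val (coeff A i - coeff P i)" using that by simp
      hence "val (coeff P i + (coeff A i - coeff P i)) = val (coeff P i)" by (rule val_strict)
      thus ?thesis by simp
    qed simp
  qed
  show "NF val A x = NF val P x"
  proof (rule antisym)
    show "NF val A x \<le> NF val P x"
    proof (cases "NF val P x = \<infinity>")
      case True then show ?thesis by simp
    next
      case False
      with SL_d[OF x0 xd] have "touch_d x" by simp
      then obtain i k t a s where ik: "i \<le> k" "k \<le> d" and t: "0 \<le> t" "t \<le> 1"
        and x: "x = (1 - t) * real i + t * real k"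
        and below: "\<forall>j\<le>n. ereal (a + s * real j) \<le> val (coeff P j)"
        and vi: "val (coeff P i) = ereal (a + s * real i)" and vk: "val (coeff P k) = ereal (a + s * real k)"
        unfolding touch_d_def by blast
      have NFi: "val (coeff P i') \<le> NF val P (real i')" if "i' \<le> d" "val (coeff P i') = ereal (a + s * real i')" for i'
        using NF_line[OF below, of "real i'"] that dle by simp
      have vAi: "val (coeff A i) = ereal (a + s * real i)" using vA[OF _ NFi[OF _ vi]] ik vi by simp
      have vAk: "val (coeff A k) = ereal (a + s * real k)" using vA[OF _ NFi[OF _ vk]] ik vk by simp
      show ?thesis
      proof (rule NF_least)
        show "0 \<le> x" "x \<le> real (degree A)" using x0 xd dA by auto
        fix g assume g: "adm A g"
        have "g x \<le> ereal (1 - t) * g (real i) + ereal t * g (real k)"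
          using g t ik dA unfolding adm_def convex_on_ereal_def x by auto
        also have "\<dots> \<le> ereal (1 - t) * ereal (a + s * real i) + ereal t * ereal (a + s * real k)"
          using g ik dA t vAi vAk unfolding adm_def
          by (intro add_mono ereal_mult_left_mono) (auto, metis le_trans)
        also have "\<dots> = ereal (a + s * x)" unfolding x by (simp add: algebra_simps)
        also have "\<dots> \<le> NF val P x" using NF_line[OF below x0 xn] .
        finally show "g x \<le> NF val P x" .
      qed
    qed
    show "NF val P x \<le> NF val A x"
    proof (rule NF_least)
      show "0 \<le> x" "x \<le> real (degree P)" using x0 xn by auto
      fix g assume g: "adm P g"
      have "adm A g"
        unfolding adm_def
      proof (intro conjI ballI allI impI)
        show "convex_on_ereal {0..real (degree A)} g"
          using g dA dle unfolding adm_def convex_on_ereal_def by auto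
        fix z assume "z \<in> {0..real (degree A)}" then show "g z \<noteq> -\<infinity>"
          using g dA dle unfolding adm_def by auto
      next
        fix i assume i: "i \<le> degree A"
        show "g (real i) \<le> val (coeff A i)"
        proof (cases "i = d")
          case True then show ?thesis using g lA dle unfolding adm_def by auto
        next
          case False
          hence id: "i < d" using i dA by simp
          have gi: "g (real i) \<le> NF val P (real i)" using NF_upper[OF _ _ g] id dle by simp
          have NP: "NF val P (real i) \<le> val (coeff P i)" using NF_coeff id dle by simp
          consider "coeff A i = coeff P i" | "NF val P (real i) < val (coeff A i - coeff P i)" using cA id by blast
          then show ?thesis
          proof cases
            case 1 then show ?thesis using gi NP by simp
          next
            case 2
            have "NF val P (real i) \<le> val ((coeff A i - coeff P i) + coeff P i)"
              using 2 NP by (intro val_add_ge) auto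
            then show ?thesis using gi by simp
          qed
        qed
      qed
      then show "g x \<le> NF val A x" using NF_upper x0 xd dA by simp
    qed
  qed
qed

end

lemma const_seq:
  assumes "A_seq P d 0 dvd P"
  shows "A_seq P d i = A_seq P d 0"
proof (induction i)
  case (Suc i)
  have "(V_seq P d i * P) mod A_seq P d 0 = 0" using assms by (simp add: mod_eq_0_iff_dvd)
  then show ?case using Suc by (simp add: A_seq_Suc)
qed simp


context epsetup begin

lemma main_case:
  assumes dn: "d < n" and d1: "1 \<le> d" and low: "\<exists>j<d. coeff P j \<noteq> 0"
  shows "\<exists>sL \<kappa>r. NF val P (real d + 1) + NF val P (real d - 1) - 2 * NF val P (real d) = ereal \<kappa>r
     \<and> nsetup val P d (\<lambda>j. NF val P (real j)) sL y \<kappa>r"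
proof -
  obtain s1 s2 where s: "s1 < s2" and l1: "\<forall>k\<le>n. ereal (y + s1 * (real k - real d)) \<le> val (coeff P k)"
    and l2: "\<forall>k\<le>n. ereal (y + s2 * (real k - real d)) \<le> val (coeff P k)" using EX_lines by blast
  have l1': "\<forall>k\<le>n. ereal (y - s1 * real d + s1 * real k) \<le> val (coeff P k)" using l1 by (simp add: algebra_simps)
  have nminf: "NF val P z \<noteq> -\<infinity>" if "0 \<le> z" "z \<le> real n" for z
  proof -
    have "ereal (y - s1 * real d + s1 * z) \<le> NF val P z" using NF_line[OF l1' that] .
    thus ?thesis by auto
  qed
  obtain j0 where j0: "j0 < d" "coeff P j0 \<noteq> 0" using low by blast
  have "NF val P (real d - 1) \<le> ereal (yv j0 + (y - yv j0) * (real d - 1 - real j0) / (real d - real j0))"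
    using NF_interp_real[of j0 P d "real d - 1" "yv j0" y] j0 dle val_fin[OF j0(2)] vy by simp
  moreover have "NF val P (real d - 1) \<noteq> -\<infinity>" using nminf d1 dle by simp
  ultimately obtain rL where rL: "NF val P (real d - 1) = ereal rL" by (cases "NF val P (real d - 1)") auto
  have cn: "coeff P n \<noteq> 0" using P0 by simp
  have "NF val P (real d + 1) \<le> ereal (y + (yv n - y) * (real d + 1 - real d) / (real n - real d))"
    using NF_interp_real[of d P n "real d + 1" y "yv n"] dn dle val_fin[OF cn] vy by simp
  moreover have "NF val P (real d + 1) \<noteq> -\<infinity>" using nminf dn by simp
  ultimately obtain rR where rR: "NF val P (real d + 1) = ereal rR" by (cases "NF val P (real d + 1)") auto
  define sL where "sL = y - rL"
  define \<kappa>r where "\<kappa>r = rR + rL - 2 * y"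
  have kE: "NF val P (real d + 1) + NF val P (real d - 1) - 2 * NF val P (real d) = ereal \<kappa>r"
    unfolding \<kappa>r_def using rL rR NF_d by simp
  have kpos: "\<kappa>r > 0" using kappa_pos kE by simp
  have rdm1: "real (d - 1) = real d - 1" using d1 by simp
  have high: "\<forall>k>d. ereal (y + (sL + \<kappa>r) * (real k - real d)) \<le> val (coeff P k)"
  proof (intro allI impI)
    fix k assume k: "d < k"
    show "ereal (y + (sL + \<kappa>r) * (real k - real d)) \<le> val (coeff P k)"
    proof (cases "coeff P k = 0")
      case True then show ?thesis by simp
    next
      case False
      have kn: "k \<le> n" using False le_degree by blast
      have "NF val P (real d + 1) \<le> ereal (y + (yv k - y) * (real d + 1 - real d) / (real k - real d))"
        using NF_interp_real[of d P k "real d + 1" y "yv k"] k kn dle val_fin[OF False] vy by simp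
      hence "rR \<le> y + (yv k - y) * (real d + 1 - real d) / (real k - real d)" using rR by simp
      hence "y + (rR - y) * (real k - real d) \<le> yv k" using k by (intro alg_highline) auto
      moreover have "sL + \<kappa>r = rR - y" unfolding sL_def \<kappa>r_def by simp
      ultimately show ?thesis using val_fin[OF False] by simp
    qed
  qed
  have "nsetup val P d (\<lambda>j. NF val P (real j)) sL y \<kappa>r"
  proof (rule nsetup.intro)
    show "dvf val" by (rule dvf_axioms)
    show "nsetup_axioms val P d (\<lambda>j. NF val P (real j)) sL y \<kappa>r"
    proof (unfold_locales)
      show "1 \<le> d" by fact
      show "d < degree P" by fact
      show "val (coeff P d) = ereal y" by (rule vy)
      show "\<forall>j<d. NF val P (real j) \<le> val (coeff P j)" using NF_coeff dle by auto
      show "NF val P (real (d - 1)) = ereal (y - sL)" unfolding rdm1 sL_def using rL by simp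
      show "\<forall>k>d. ereal (y + (sL + \<kappa>r) * (real k - real d)) \<le> val (coeff P k)" by (rule high)
      show "0 < \<kappa>r" by (rule kpos)
      show "\<forall>j. 1 \<le> j \<longrightarrow> j < d \<longrightarrow> NF val P (real j) \<le> NF val P (real (j - 1)) + ereal sL"
      proof (intro allI impI)
        fix j assume j1: "1 \<le> j" and jd: "j < d"
        have rj: "real (j - 1) = real j - 1" using j1 by simp
        show "NF val P (real j) \<le> NF val P (real (j - 1)) + ereal sL"
        proof (cases "NF val P (real (j - 1))")
          case PInf then show ?thesis by simp
        next
          case MInf
          have "NF val P (real (j - 1)) \<noteq> -\<infinity>" using nminf[of "real (j - 1)"] jd dle by simp
          then show ?thesis using MInf by simp
        next
          case (real a)
          define t1 where "t1 = 1 / (real d - real j + 1)"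
          define t2 where "t2 = 1 - t1"
          have den: "real d - real j + 1 > 0" using jd by simp
          have t1: "0 \<le> t1" "t1 \<le> 1" unfolding t1_def using den jd by (auto simp: divide_le_eq)
          have t2: "0 \<le> t2" "t2 \<le> 1" unfolding t2_def using t1 by auto
          have tt: "t1 * (real d - real j + 1) = 1" unfolding t1_def using den by simp
          have pos1: "(1 - t1) * (real j - 1) + t1 * real d = real j" using tt by (simp add: algebra_simps)
          have pos2: "(1 - t2) * (real j - 1) + t2 * real d = real d - 1"
            unfolding t2_def using tt by (simp add: algebra_simps)
          have r0: "0 \<le> real j - 1" "real j - 1 \<le> real n" using j1 jd dle by auto
          have r1: "0 \<le> real d" "real d \<le> real n" using dle by auto
          have "NF val P ((1 - t1) * (real j - 1) + t1 * real d)
              \<le> ereal (1 - t1) * NF val P (real j - 1) + ereal t1 * NF val P (real d)"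
            by (rule NF_conv[OF r0 r1 t1])
          hence f1: "NF val P (real j) \<le> ereal ((1 - t1) * a + t1 * y)"
            unfolding pos1 using real rj NF_d by simp
          have "NF val P ((1 - t2) * (real j - 1) + t2 * real d)
              \<le> ereal (1 - t2) * NF val P (real j - 1) + ereal t2 * NF val P (real d)"
            by (rule NF_conv[OF r0 r1 t2])
          hence f2: "rL \<le> (1 - t2) * a + t2 * y"
            unfolding pos2 using real rj NF_d rL by simp
          have "t1 + t2 = 1" unfolding t2_def by simp
          from f1 obtain f where f: "NF val P (real j) = ereal f" "f \<le> (1 - t1) * a + t1 * y"
            using nminf[of "real j"] jd dle by (cases "NF val P (real j)") auto
          have "f \<le> a + (y - rL)" by (rule alg_slope[OF \<open>t1 + t2 = 1\<close> f(2) f2])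
          then show ?thesis using f real unfolding sL_def by simp
        qed
      qed
      show "\<forall>j<d. ereal (y - sL * real d + sL * real j) \<le> NF val P (real j)"
      proof (intro allI impI)
        fix j assume jd: "j < d"
        have lin: "\<forall>k\<le>n. ereal (y - sL * real d + sL * real k) \<le> val (coeff P k)"
        proof (intro allI impI)
          fix k assume kn: "k \<le> n"
          show "ereal (y - sL * real d + sL * real k) \<le> val (coeff P k)"
          proof (cases "coeff P k = 0")
            case True then show ?thesis by simp
          next
            case ck: False
            consider "k < d" | "k = d" | "d < k" by linarith
            then show ?thesis
            proof cases
              case 1
              have "NF val P (real d - 1) \<le> ereal (yv k + (y - yv k) * (real d - 1 - real k) / (real d - real k))"
                using NF_interp_real[of k P d "real d - 1" "yv k" y] 1 dle val_fin[OF ck] vy by simp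
              hence "rL \<le> yv k + (y - yv k) * (real d - 1 - real k) / (real d - real k)" using rL by simp
              hence "y + (y - rL) * (real k - real d) \<le> yv k" using 1 by (intro alg_lowline) auto
              then show ?thesis using val_fin[OF ck] unfolding sL_def by (simp add: algebra_simps)
            next
              case 2 then show ?thesis using vy by simp
            next
              case 3
              have "ereal (y + (sL + \<kappa>r) * (real k - real d)) \<le> val (coeff P k)" using high 3 by blast
              moreover have "y - sL * real d + sL * real k \<le> y + (sL + \<kappa>r) * (real k - real d)"
                using 3 kpos by (simp add: algebra_simps)
              ultimately show ?thesis by (metis ereal_less_eq(3) order_trans)
            qed
          qed
        qed
        show "ereal (y - sL * real d + sL * real j) \<le> NF val P (real j)"
          using NF_line[OF lin, of "real j"] jd dle by simp
      qed
    qed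
  qed
  with kE show ?thesis by blast
qed

end

theorem theorem4p1:
  fixes val :: "'a::field \<Rightarrow> ereal" and P :: "'a poly" and n d :: nat
  assumes "complete_dvf val"
    and "degree P = n" and "P \<noteq> 0"
    and "d \<le> n"
    and "\<exists>y. val (coeff P d) = ereal y \<and> (real d, y) extreme_point_of NP val P"
  defines "\<kappa> \<equiv> NF val P (real d + 1) + NF val P (real d - 1) - 2 * NF val P (real d)"
  shows "(\<forall>i. degree (A_seq P d i) = d \<and> lead_coeff (A_seq P d i) = coeff P d)
       \<and> (\<exists>Ainf. poly_val_converges val (A_seq P d) Ainf
                \<and> Ainf dvd P \<and> degree Ainf = d \<and> lead_coeff Ainf = coeff P d
                \<and> (\<forall>x\<in>{0..real d}. NF val Ainf x = NF val P x)
                \<and> (\<forall>i. \<forall>j<d. NF val P (real j) + ereal (2 ^ i) * \<kappa>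
                                \<le> val (coeff (Ainf - A_seq P d i) j)))
       \<and> \<kappa> > 0"
proof -
  interpret dvf val by (rule dvf.intro) (rule assms(1))
  obtain y where vy: "val (coeff P d) = ereal y" and ext: "(real d, y) extreme_point_of NP val P"
    using assms(5) by blast
  interpret E: epsetup val P d y
    by (rule epsetup.intro, rule dvf_axioms, unfold_locales) (use assms vy ext in auto)
  have kp: "\<kappa> > 0" unfolding \<kappa>_def by (rule E.kappa_pos)
  have cd: "coeff P d \<noteq> 0" by (rule E.cd0)
  define A0 where "A0 = A_seq P d 0"
  have cA0: "coeff A0 j = (if j \<le> d then coeff P j else 0)" for j
    unfolding A0_def A_seq_0 by (rule coeff_A0)
  have dA0: "degree A0 = d"
  proof -
    have "degree A0 \<le> d" by (rule degree_le) (simp add: cA0)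
    moreover have "d \<le> degree A0" by (rule le_degree) (simp add: cA0 cd)
    ultimately show ?thesis by simp
  qed
  show ?thesis
  proof (cases "A0 dvd P")
    case True
    have const: "A_seq P d i = A0" for i unfolding A0_def by (rule const_seq) (use True A0_def in simp)
    have p1: "\<forall>i. degree (A_seq P d i) = d \<and> lead_coeff (A_seq P d i) = coeff P d"
      using dA0 const by (simp add: cA0)
    have conv: "poly_val_converges val (A_seq P d) A0"
      unfolding poly_val_converges_def const by simp
    have nf: "\<forall>x\<in>{0..real d}. NF val A0 x = NF val P x"
      by (rule E.NF_part2) (auto simp: dA0 cA0)
    have rt: "\<forall>i. \<forall>j<d. NF val P (real j) + ereal (2 ^ i) * \<kappa> \<le> val (coeff (A0 - A_seq P d i) j)"
      using const by simp
    have lA0: "lead_coeff A0 = coeff P d" using dA0 cA0 by simp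
    show ?thesis using p1 conv True dA0 lA0 nf rt kp by blast
  next
    case False
    have dn: "d < n"
    proof (rule ccontr)
      assume "\<not> d < n"
      hence "d = degree P" using assms(2,4) by simp
      hence "A0 = P" unfolding A0_def A_seq_0 using poly_as_sum_of_monoms[of P] by simp
      thus False using False by simp
    qed
    have low: "\<exists>j<d. coeff P j \<noteq> 0"
    proof (rule ccontr)
      assume "\<not> (\<exists>j<d. coeff P j \<noteq> 0)"
      hence z: "\<forall>j<d. coeff P j = 0" by simp
      have "P = A0 * smult (inverse (coeff P d)) (poly_shift d P)"
      proof (rule poly_eqI)
        fix k
        have A0m: "A0 = monom (coeff P d) d"
          by (rule poly_eqI) (use z in \<open>auto simp: cA0 coeff_monom\<close>)
        show "coeff P k = coeff (A0 * smult (inverse (coeff P d)) (poly_shift d P)) k"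
          unfolding A0m using z cd by (auto simp: coeff_monom_mult coeff_poly_shift)
      qed
      hence "A0 dvd P" by (metis dvdI)
      thus False using False by simp
    qed
    have d1: "1 \<le> d" using low by auto
    obtain sL \<kappa>r where kE: "\<kappa> = ereal \<kappa>r"
      and N: "nsetup val P d (\<lambda>j. NF val P (real j)) sL y \<kappa>r"
      using E.main_case[OF _ d1 low] dn assms(2) unfolding \<kappa>_def by blast
    obtain Ainf where conv: "poly_val_converges val (A_seq P d) Ainf" and dv: "Ainf dvd P"
      and dAi: "degree Ainf = d" and lAi: "lead_coeff Ainf = coeff P d"
      and cAi: "\<forall>j<d. coeff Ainf j = coeff P j \<or> NF val P (real j) < val (coeff Ainf j - coeff P j)"
      and rAi: "\<forall>i. \<forall>j<d. NF val P (real j) + ereal (2 ^ i * \<kappa>r) \<le> val (coeff (Ainf - A_seq P d i) j)"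
      and p1: "\<forall>i. degree (A_seq P d i) = d \<and> lead_coeff (A_seq P d i) = coeff P d"
      using nsetup.main_result[OF N] by blast
    have nf: "\<forall>x\<in>{0..real d}. NF val Ainf x = NF val P x"
      by (rule E.NF_part2) (use dAi lAi cAi in auto)
    have rt: "\<forall>i. \<forall>j<d. NF val P (real j) + ereal (2 ^ i) * \<kappa> \<le> val (coeff (Ainf - A_seq P d i) j)"
      using rAi unfolding kE by simp
    show ?thesis using p1 conv dv dAi lAi nf rt kp by blast
  qed
qed


end
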